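(* Fix $\alpha\in(0,1/6)$. Let \[ \Delta_\alpha=\Big\{(x,z)\in\mathbb{R}^2:\ x\in\big(-\tfrac{2}{\alpha}+1-3\alpha,\ 1-3\alpha\big),\ z\ge -\tfrac{2}{\alpha\pi}\log\cos\Big(\tfrac{\alpha\pi}{2}\big(x-1+3\alpha+\tfrac1\alpha\big)\Big)\Big\}, \] let $d(x,z)$ be the Euclidean distance from $(x,z)$ to $\Delta_\alpha$, let $(\Delta_\alpha)^{2\alpha}=\{(x,z):d(x,z)\le 2\alpha\}$, and define $\varphi_\alpha:\mathrm{cl}\big((\Delta_\alpha)^{2\alpha}\setminus\Delta_\alpha\big)\to\mathbb{R}$ by \[ \varphi_\alpha(x,z)=-1+2\alpha-\sqrt{4\alpha^2-d(x,z)^2}. \] Then $\varphi=\varphi_\alpha$ is a convex function satisfying \[ \frac{\det D^2\varphi}{(1+|D\varphi|^2)^{3/2}}\le-\frac{\pi}{4}\varphi_z \] on its domain (at points where the derivatives are defined).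
   Context: Here $D$ and $D^2$ denote the gradient and Hessian in the variables $(x,z)$, and $\varphi_z$ the partial derivative in $z$. *)

theory Defs
  imports "HOL-Analysis.Analysis"
begin

text \<open>Points of the plane are pairs (x,z) :: real \<times> real; the product metric on
  real \<times> real is the Euclidean one.\<close>

definition Delta :: "real \<Rightarrow> (real \<times> real) set" where
  "Delta \<alpha> = {(x, z). -2/\<alpha> + 1 - 3*\<alpha> < x \<and> x < 1 - 3*\<alpha> \<and>
      z \<ge> -(2/(\<alpha>*pi)) * ln (cos ((\<alpha>*pi/2) * (x - 1 + 3*\<alpha> + 1/\<alpha>)))}"

definition dDelta :: "real \<Rightarrow> real \<times> real \<Rightarrow> real" where
  "dDelta \<alpha> p = infdist p (Delta \<alpha>)"

definition DeltaNbhd :: "real \<Rightarrow> (real \<times> real) set" where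
  "DeltaNbhd \<alpha> = {p. dDelta \<alpha> p \<le> 2*\<alpha>}"

definition phiDom :: "real \<Rightarrow> (real \<times> real) set" where
  "phiDom \<alpha> = closure (DeltaNbhd \<alpha> - Delta \<alpha>)"

definition phi :: "real \<Rightarrow> real \<times> real \<Rightarrow> real" where
  "phi \<alpha> p = -1 + 2*\<alpha> - sqrt (4*\<alpha>^2 - (dDelta \<alpha> p)^2)"

end

theory Submission
  imports Defs
begin

definition th :: "real \<Rightarrow> real \<Rightarrow> real" where
  "th \<alpha> x = (\<alpha>*pi/2) * (x - 1 + 3*\<alpha> + 1/\<alpha>)"
definition gg :: "real \<Rightarrow> real \<Rightarrow> real" where
  "gg \<alpha> x = -(2/(\<alpha>*pi)) * ln (cos (th \<alpha> x))"
definition lo :: "real \<Rightarrow> real" where "lo \<alpha> = -2/\<alpha> + 1 - 3*\<alpha>"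
definition hi :: "real \<Rightarrow> real" where "hi \<alpha> = 1 - 3*\<alpha>"

lemma Delta_iff: "(x, z) \<in> Delta \<alpha> \<longleftrightarrow> lo \<alpha> < x \<and> x < hi \<alpha> \<and> z \<ge> gg \<alpha> x"
  by (simp add: Delta_def lo_def hi_def gg_def th_def)

lemma th_range:
  assumes "0 < \<alpha>" "lo \<alpha> < x" "x < hi \<alpha>"
  shows "-(pi/2) < th \<alpha> x \<and> th \<alpha> x < pi/2"
proof -
  have e: "th \<alpha> x = (\<alpha>*pi/2) * (x - lo \<alpha>) - pi/2"
    using assms(1) by (simp add: th_def lo_def field_simps)
  have e2: "th \<alpha> x = pi/2 - (\<alpha>*pi/2) * (hi \<alpha> - x)"
    using assms(1) by (simp add: th_def hi_def field_simps)
  have "0 < (\<alpha>*pi/2) * (x - lo \<alpha>)" "0 < (\<alpha>*pi/2) * (hi \<alpha> - x)"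
    using assms by (auto intro!: mult_pos_pos)
  then show ?thesis using e e2 by linarith
qed

lemma cos_th_pos:
  assumes "0 < \<alpha>" "lo \<alpha> < x" "x < hi \<alpha>"
  shows "cos (th \<alpha> x) > 0"
  using th_range[OF assms] by (intro cos_gt_zero_pi) auto

lemma th_deriv: "(th \<alpha> has_real_derivative (\<alpha>*pi/2)) (at x)"
  unfolding th_def by (auto intro!: derivative_eq_intros)

lemma gg_deriv:
  assumes "0 < \<alpha>" "lo \<alpha> < x" "x < hi \<alpha>"
  shows "(gg \<alpha> has_real_derivative tan (th \<alpha> x)) (at x)"
proof -
  have c: "cos (th \<alpha> x) > 0" using cos_th_pos[OF assms] .
  have "(gg \<alpha> has_real_derivative -(2/(\<alpha>*pi)) * ((- sin (th \<alpha> x) * (\<alpha>*pi/2)) / cos (th \<alpha> x))) (at x)"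
    unfolding gg_def
    by (rule derivative_eq_intros th_deriv refl | use c in simp)+
  moreover have "-(2/(\<alpha>*pi)) * ((- sin (th \<alpha> x) * (\<alpha>*pi/2)) / cos (th \<alpha> x)) = tan (th \<alpha> x)"
    using assms(1) by (simp add: tan_def field_simps)
  ultimately show ?thesis by simp
qed


lemma gg_convex:
  assumes "0 < \<alpha>"
  shows "convex_on {lo \<alpha> <..< hi \<alpha>} (gg \<alpha>)"
proof (rule convex_on_realI[where f' = "\<lambda>x. tan (th \<alpha> x)"])
  show "connected {lo \<alpha><..<hi \<alpha>}" by simp
  show "\<And>x. x \<in> {lo \<alpha><..<hi \<alpha>} \<Longrightarrow> (gg \<alpha> has_real_derivative tan (th \<alpha> x)) (at x)"
    using gg_deriv assms by auto
  fix x y assume xy: "x \<in> {lo \<alpha><..<hi \<alpha>}" "y \<in> {lo \<alpha><..<hi \<alpha>}" "x \<le> y"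
  have "th \<alpha> x \<le> th \<alpha> y" using xy assms unfolding th_def
    by (intro mult_left_mono) auto
  then show "tan (th \<alpha> x) \<le> tan (th \<alpha> y)"
    using th_range[OF assms, of x] th_range[OF assms, of y] xy by (intro tan_mono_le) auto
qed

lemma gg_tangent:
  assumes "0 < \<alpha>" "lo \<alpha> < x0" "x0 < hi \<alpha>" "lo \<alpha> < x" "x < hi \<alpha>"
  shows "gg \<alpha> x - gg \<alpha> x0 \<ge> tan (th \<alpha> x0) * (x - x0)"
  apply (rule convex_on_imp_above_tangent[OF gg_convex[OF assms(1)]])
  using assms gg_deriv[OF assms(1-3)] by (auto simp: interior_open has_field_derivative_at_within)

definition Oin :: "real \<Rightarrow> (real \<times> real) set" where
  "Oin \<alpha> = {w. lo \<alpha> < fst w \<and> fst w < hi \<alpha> \<and> gg \<alpha> (fst w) < snd w}"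

lemma Oin_sub: "Oin \<alpha> \<subseteq> Delta \<alpha>"
  by (auto simp: Oin_def Delta_iff)

lemma th_cont: "continuous_on S (th \<alpha>)"
  unfolding th_def by (intro continuous_intros)

lemma Oin_open:
  assumes "0 < \<alpha>"
  shows "open (Oin \<alpha>)"
proof -
  let ?S = "fst -` {lo \<alpha><..<hi \<alpha>} :: (real\<times>real) set"
  have oS: "open ?S" by (intro open_vimage_fst) auto
  have c1: "continuous_on ?S (\<lambda>w. cos (th \<alpha> (fst w)))" unfolding th_def by (intro continuous_intros)
  have c2: "continuous_on ?S (\<lambda>w. ln (cos (th \<alpha> (fst w))))"
    by (rule continuous_on_ln[OF c1]) (use cos_th_pos[OF assms] in force)
  have "continuous_on ?S (\<lambda>w. snd w - gg \<alpha> (fst w))"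
    unfolding gg_def by (intro continuous_intros c2)
  then have "open (?S \<inter> (\<lambda>w. snd w - gg \<alpha> (fst w)) -` {0<..})"
    using oS by (intro continuous_open_preimage) auto
  moreover have "?S \<inter> (\<lambda>w. snd w - gg \<alpha> (fst w)) -` {0<..} = Oin \<alpha>"
    by (auto simp: Oin_def)
  ultimately show ?thesis by simp
qed

lemma Delta_eq_pt:
  assumes "0 < \<alpha>"
  shows "(x, z) \<in> Delta \<alpha> \<longleftrightarrow> lo \<alpha> \<le> x \<and> x \<le> hi \<alpha> \<and>
     exp (- z * (\<alpha>*pi/2)) \<le> cos (th \<alpha> x)"
proof
  assume "(x, z) \<in> Delta \<alpha>"
  then have h: "lo \<alpha> < x" "x < hi \<alpha>" "gg \<alpha> x \<le> z" by (auto simp: Delta_iff)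
  have c: "cos (th \<alpha> x) > 0" using cos_th_pos[OF assms h(1,2)] .
  have "-(2/(\<alpha>*pi)) * ln (cos (th \<alpha> x)) \<le> z" using h(3) by (simp add: gg_def)
  then have "- z * (\<alpha>*pi/2) \<le> ln (cos (th \<alpha> x))" using assms
    by (simp add: field_simps)
  then have "exp (- z * (\<alpha>*pi/2)) \<le> exp (ln (cos (th \<alpha> x)))" by simp
  then show "lo \<alpha> \<le> x \<and> x \<le> hi \<alpha> \<and> exp (- z * (\<alpha>*pi/2)) \<le> cos (th \<alpha> x)"
    using c h by simp
next
  assume h: "lo \<alpha> \<le> x \<and> x \<le> hi \<alpha> \<and> exp (- z * (\<alpha>*pi/2)) \<le> cos (th \<alpha> x)"
  have c: "cos (th \<alpha> x) > 0" using h by (smt (verit) exp_gt_zero)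
  have "th \<alpha> (lo \<alpha>) = -(pi/2)" "th \<alpha> (hi \<alpha>) = pi/2" using assms
    by (auto simp: th_def lo_def hi_def field_simps)
  then have "cos (th \<alpha> (lo \<alpha>)) = 0" "cos (th \<alpha> (hi \<alpha>)) = 0" by (metis cos_pi_half cos_minus)+
  then have "x \<noteq> lo \<alpha>" "x \<noteq> hi \<alpha>" using c by auto
  then have x: "lo \<alpha> < x" "x < hi \<alpha>" using h by auto
  have "ln (exp (- z * (\<alpha>*pi/2))) \<le> ln (cos (th \<alpha> x))" using c h
    by (subst ln_le_cancel_iff) auto
  then have "- z * (\<alpha>*pi/2) \<le> ln (cos (th \<alpha> x))" by simp
  then have "gg \<alpha> x \<le> z" using assms by (simp add: gg_def field_simps)
  then show "(x, z) \<in> Delta \<alpha>" using x by (simp add: Delta_iff)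
qed

lemma Delta_eq:
  assumes "0 < \<alpha>"
  shows "Delta \<alpha> = {w. lo \<alpha> \<le> fst w \<and> fst w \<le> hi \<alpha> \<and>
     exp (- snd w * (\<alpha>*pi/2)) \<le> cos (th \<alpha> (fst w))}"
proof (rule set_eqI)
  fix w :: "real \<times> real"
  obtain x z where w: "w = (x, z)" by fastforce
  show "w \<in> Delta \<alpha> \<longleftrightarrow> w \<in> {w. lo \<alpha> \<le> fst w \<and> fst w \<le> hi \<alpha> \<and>
     exp (- snd w * (\<alpha>*pi/2)) \<le> cos (th \<alpha> (fst w))}"
    unfolding w Delta_eq_pt[OF assms] by simp
qed

lemma Delta_closed:
  assumes "0 < \<alpha>"
  shows "closed (Delta \<alpha>)"
  unfolding Delta_eq[OF assms] Collect_conj_eq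
  unfolding th_def by (intro closed_Int closed_Collect_le continuous_intros)

lemma Delta_ne:
  assumes "0 < \<alpha>"
  shows "(hi \<alpha> - 1/\<alpha>, 0) \<in> Delta \<alpha>"
proof -
  have t: "th \<alpha> (hi \<alpha> - 1/\<alpha>) = 0" by (simp add: th_def hi_def)
  have "lo \<alpha> < hi \<alpha> - 1/\<alpha>" "hi \<alpha> - 1/\<alpha> < hi \<alpha>"
    using assms by (auto simp: lo_def hi_def divide_strict_right_mono)
  moreover have "gg \<alpha> (hi \<alpha> - 1/\<alpha>) = 0" unfolding gg_def t by simp
  ultimately show ?thesis by (simp add: Delta_iff)
qed

lemma nearest:
  assumes "0 < \<alpha>"
  shows "\<exists>q\<in>Delta \<alpha>. dDelta \<alpha> p = dist p q"
proof -
  obtain q where q: "q \<in> Delta \<alpha>" "\<forall>y\<in>Delta \<alpha>. dist p q \<le> dist p y"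
    using distance_attains_inf[OF Delta_closed[OF assms], of p] Delta_ne[OF assms] by (metis empty_iff)
  have "infdist p (Delta \<alpha>) = dist p q"
  proof (intro antisym infdist_le q(1))
    have ne: "Delta \<alpha> \<noteq> {}" using q(1) by auto
    show "dist p q \<le> infdist p (Delta \<alpha>)"
      unfolding infdist_notempty[OF ne] by (rule cINF_greatest[OF ne]) (use q in auto)
  qed
  then show ?thesis using q unfolding dDelta_def by blast
qed



lemma Delta_convex:
  assumes "0 < \<alpha>"
  shows "convex (Delta \<alpha>)"
proof (rule convexI)
  fix p q :: "real \<times> real" and u v :: real
  assume pq: "p \<in> Delta \<alpha>" "q \<in> Delta \<alpha>" and uv: "0 \<le> u" "0 \<le> v" "u + v = 1"
  obtain x z where p: "p = (x, z)" by fastforce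
  obtain x' z' where q: "q = (x', z')" by fastforce
  have h: "lo \<alpha> < x" "x < hi \<alpha>" "gg \<alpha> x \<le> z" "lo \<alpha> < x'" "x' < hi \<alpha>" "gg \<alpha> x' \<le> z'"
    using pq by (auto simp: p q Delta_iff)
  have v: "v \<le> 1" "u = 1 - v" using uv by auto
  have "u *\<^sub>R x + v *\<^sub>R x' \<in> {lo \<alpha><..<hi \<alpha>}"
    using h uv by (intro convexD[OF convex_real_interval(8)]) auto
  then have "lo \<alpha> < u * x + v * x'" "u * x + v * x' < hi \<alpha>" by auto
  moreover have "gg \<alpha> ((1 - v) *\<^sub>R x + v *\<^sub>R x') \<le> (1 - v) * gg \<alpha> x + v * gg \<alpha> x'"
    using convex_onD[OF gg_convex[OF assms]] h v uv by auto
  moreover have "(1 - v) * gg \<alpha> x + v * gg \<alpha> x' \<le> u * z + v * z'"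
  proof -
    have "u * gg \<alpha> x \<le> u * z" by (rule mult_left_mono) (use h uv in auto)
    moreover have "v * gg \<alpha> x' \<le> v * z'" by (rule mult_left_mono) (use h uv in auto)
    ultimately show ?thesis using v by simp
  qed
  ultimately show "u *\<^sub>R p + v *\<^sub>R q \<in> Delta \<alpha>"
    using v by (simp add: p q Delta_iff)
qed

lemma dDelta_convex:
  assumes "0 < \<alpha>" "0 \<le> t" "t \<le> 1"
  shows "dDelta \<alpha> ((1 - t) *\<^sub>R p1 + t *\<^sub>R p2) \<le> (1 - t) * dDelta \<alpha> p1 + t * dDelta \<alpha> p2"
proof -
  obtain q1 where q1: "q1 \<in> Delta \<alpha>" "dDelta \<alpha> p1 = dist p1 q1" using nearest[OF assms(1)] by blast
  obtain q2 where q2: "q2 \<in> Delta \<alpha>" "dDelta \<alpha> p2 = dist p2 q2" using nearest[OF assms(1)] by blast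
  have qi: "(1 - t) *\<^sub>R q1 + t *\<^sub>R q2 \<in> Delta \<alpha>"
    using Delta_convex[OF assms(1)] q1 q2 assms by (intro convexD) auto
  have "dDelta \<alpha> ((1 - t) *\<^sub>R p1 + t *\<^sub>R p2) \<le> dist ((1 - t) *\<^sub>R p1 + t *\<^sub>R p2) ((1 - t) *\<^sub>R q1 + t *\<^sub>R q2)"
    unfolding dDelta_def using qi by (rule infdist_le)
  also have "\<dots> = norm ((1 - t) *\<^sub>R (p1 - q1) + t *\<^sub>R (p2 - q2))"
    by (simp add: dist_norm algebra_simps)
  also have "\<dots> \<le> norm ((1 - t) *\<^sub>R (p1 - q1)) + norm (t *\<^sub>R (p2 - q2))" by (rule norm_triangle_ineq)
  also have "\<dots> = (1 - t) * dist p1 q1 + t * dist p2 q2" using assms by (simp add: dist_norm)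
  finally show ?thesis using q1 q2 by simp
qed

lemma sqrt_concave:
  fixes R a b t :: real
  assumes "0 \<le> a" "a \<le> R" "0 \<le> b" "b \<le> R" "0 \<le> t" "t \<le> 1"
  shows "(1 - t) * sqrt (R\<^sup>2 - a\<^sup>2) + t * sqrt (R\<^sup>2 - b\<^sup>2) \<le> sqrt (R\<^sup>2 - ((1 - t) * a + t * b)\<^sup>2)"
proof -
  define A where "A = sqrt (R\<^sup>2 - a\<^sup>2)"
  define B where "B = sqrt (R\<^sup>2 - b\<^sup>2)"
  have "a\<^sup>2 \<le> R\<^sup>2" by (rule power_mono) (use assms in auto)
  then have A: "A \<ge> 0" "A\<^sup>2 = R\<^sup>2 - a\<^sup>2" unfolding A_def by auto
  have "b\<^sup>2 \<le> R\<^sup>2" by (rule power_mono) (use assms in auto)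
  then have B: "B \<ge> 0" "B\<^sup>2 = R\<^sup>2 - b\<^sup>2" unfolding B_def by auto
  have R: "R \<ge> 0" using assms by auto
  have cs: "(a*b + A*B)\<^sup>2 \<le> (R\<^sup>2)\<^sup>2"
  proof -
    have "(a*b + A*B)\<^sup>2 \<le> (a\<^sup>2 + A\<^sup>2) * (b\<^sup>2 + B\<^sup>2)"
    proof -
      have "(a\<^sup>2 + A\<^sup>2) * (b\<^sup>2 + B\<^sup>2) - (a*b + A*B)\<^sup>2 = (a*B - A*b)\<^sup>2"
        by (simp add: power2_eq_square algebra_simps)
      then show ?thesis by (metis diff_ge_0_iff_ge zero_le_power2)
    qed
    also have "\<dots> = (R\<^sup>2)\<^sup>2" using A B by (simp add: power2_eq_square)
    finally show ?thesis .
  qed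
  have ab: "a*b + A*B \<le> R\<^sup>2"
  proof -
    have "\<bar>a*b + A*B\<bar> \<le> \<bar>R\<^sup>2\<bar>" using cs by (simp only: abs_le_square_iff)
    then show ?thesis by simp
  qed
  have lhs0: "(1 - t) * A + t * B \<ge> 0" using A B assms by auto
  have "((1 - t) * A + t * B)\<^sup>2 \<le> R\<^sup>2 - ((1 - t) * a + t * b)\<^sup>2"
  proof -
    have "R\<^sup>2 - ((1 - t) * a + t * b)\<^sup>2 - ((1 - t) * A + t * B)\<^sup>2
        = 2 * (1 - t) * t * (R\<^sup>2 - a*b - A*B)"
    proof -
      have "R\<^sup>2 - ((1 - t) * a + t * b)\<^sup>2 - ((1 - t) * A + t * B)\<^sup>2
         = R\<^sup>2 - (1-t)\<^sup>2 * (a\<^sup>2 + A\<^sup>2) - t\<^sup>2 * (b\<^sup>2 + B\<^sup>2) - 2*t*(1-t)*(a*b + A*B)"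
        by (simp add: power2_eq_square algebra_simps)
      also have "\<dots> = R\<^sup>2 - (1-t)\<^sup>2 * R\<^sup>2 - t\<^sup>2 * R\<^sup>2 - 2*t*(1-t)*(a*b + A*B)"
        using A B by simp
      also have "\<dots> = 2 * (1 - t) * t * (R\<^sup>2 - a*b - A*B)"
        by (simp add: power2_eq_square algebra_simps)
      finally show ?thesis .
    qed
    moreover have "2 * (1 - t) * t * (R\<^sup>2 - a*b - A*B) \<ge> 0" using ab assms by auto
    ultimately show ?thesis by linarith
  qed
  then show ?thesis unfolding A_def[symmetric] B_def[symmetric] by (rule real_le_rsqrt)
qed



lemma phiDom_le:
  assumes "p \<in> phiDom \<alpha>"
  shows "dDelta \<alpha> p \<le> 2*\<alpha>"
proof -
  have "closed (DeltaNbhd \<alpha>)"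
    unfolding DeltaNbhd_def dDelta_def
    by (intro closed_Collect_le continuous_intros)
  then have "phiDom \<alpha> \<subseteq> DeltaNbhd \<alpha>"
    unfolding phiDom_def by (simp add: closure_minimal)
  then show ?thesis using assms by (auto simp: DeltaNbhd_def)
qed

lemma part1:
  assumes "0 < \<alpha>" "C \<subseteq> phiDom \<alpha>" "convex C"
  shows "convex_on C (phi \<alpha>)"
proof (rule convex_onI[OF _ assms(3)])
  fix t :: real and x y assume t: "0 < t" "t < 1" and xy: "x \<in> C" "y \<in> C"
  let ?z = "(1 - t) *\<^sub>R x + t *\<^sub>R y"
  let ?R = "2*\<alpha>"
  define a where "a = dDelta \<alpha> x"
  define b where "b = dDelta \<alpha> y"
  have a: "0 \<le> a" "a \<le> ?R" using phiDom_le[of x \<alpha>] xy assms unfolding a_def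
    by (auto simp: infdist_nonneg dDelta_def)
  have b: "0 \<le> b" "b \<le> ?R" using phiDom_le[of y \<alpha>] xy assms unfolding b_def
    by (auto simp: infdist_nonneg dDelta_def)
  have dz: "0 \<le> dDelta \<alpha> ?z" "dDelta \<alpha> ?z \<le> (1 - t) * a + t * b"
    using dDelta_convex[OF assms(1), of t x y] t unfolding a_def b_def dDelta_def
    by (auto simp: infdist_nonneg)
  have "((1 - t) * a + t * b)\<^sup>2 \<ge> (dDelta \<alpha> ?z)\<^sup>2" using dz by (intro power_mono) auto
  then have s1: "sqrt (?R\<^sup>2 - ((1 - t) * a + t * b)\<^sup>2) \<le> sqrt (?R\<^sup>2 - (dDelta \<alpha> ?z)\<^sup>2)"
    by (intro real_sqrt_le_mono) auto
  have s2: "(1 - t) * sqrt (?R\<^sup>2 - a\<^sup>2) + t * sqrt (?R\<^sup>2 - b\<^sup>2) \<le> sqrt (?R\<^sup>2 - ((1 - t) * a + t * b)\<^sup>2)"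
    using a b t by (intro sqrt_concave) auto
  have R2: "?R\<^sup>2 = 4*\<alpha>^2" by (simp add: power2_eq_square)
  have "(1 - t) * sqrt (4*\<alpha>^2 - a\<^sup>2) + t * sqrt (4*\<alpha>^2 - b\<^sup>2) \<le> sqrt (4*\<alpha>^2 - (dDelta \<alpha> ?z)\<^sup>2)"
    using order_trans[OF s2 s1] unfolding R2 .
  then show "phi \<alpha> ?z \<le> (1 - t) * phi \<alpha> x + t * phi \<alpha> y"
    unfolding phi_def a_def b_def by (simp add: algebra_simps)
qed



lemma dist_pp: "dist (a::real, b::real) (c, d) = sqrt ((a - c)\<^sup>2 + (b - d)\<^sup>2)"
  by (simp add: dist_Pair_Pair dist_real_def)

lemma cs_ident: "(X::real)\<^sup>2 + Y\<^sup>2 - (X * ss - Y * cc)\<^sup>2 = (X * cc + Y * ss)\<^sup>2 + (X\<^sup>2+Y\<^sup>2)*(1 - ss\<^sup>2 - cc\<^sup>2)"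
  by (simp add: power2_eq_square algebra_simps)

lemma d_pos:
  assumes "0 < \<alpha>" "open U" "U \<subseteq> phiDom \<alpha>" "p \<in> U"
  shows "0 < dDelta \<alpha> p"
proof (rule ccontr)
  assume "\<not> 0 < dDelta \<alpha> p"
  then have "dDelta \<alpha> p = 0" using infdist_nonneg[of p "Delta \<alpha>"] unfolding dDelta_def by linarith
  then have pD: "p \<in> Delta \<alpha>"
    using in_closed_iff_infdist_zero[OF Delta_closed[OF assms(1)]] Delta_ne[OF assms(1)]
    unfolding dDelta_def by blast
  obtain x z where p: "p = (x, z)" by fastforce
  obtain e where e: "e > 0" "ball p e \<subseteq> U" using assms(2,4) open_contains_ball by blast
  define w where "w = (x, z + e/2)"
  have "dist p w < e" using e by (simp add: p w_def dist_pp)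
  then have wU: "w \<in> U" using e by auto
  have "w \<in> Oin \<alpha>" using pD e by (simp add: p w_def Delta_iff Oin_def)
  moreover have "Oin \<alpha> \<inter> phiDom \<alpha> = {}"
    unfolding phiDom_def using Oin_sub by (subst open_Int_closure_eq_empty[OF Oin_open[OF assms(1)]]) auto
  ultimately show False using wU assms(3) by auto
qed

lemma lowerbd:
  assumes "0 < \<alpha>" "lo \<alpha> < x0" "x0 < hi \<alpha>"
  shows "dDelta \<alpha> w \<ge> (fst w - x0) * sin (th \<alpha> x0) - (snd w - gg \<alpha> x0) * cos (th \<alpha> x0)"
proof -
  let ?s = "sin (th \<alpha> x0)" and ?c = "cos (th \<alpha> x0)"
  obtain q where q: "q \<in> Delta \<alpha>" "dDelta \<alpha> w = dist w q" using nearest[OF assms(1)] by blast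
  obtain y1 y2 where qq: "q = (y1, y2)" by fastforce
  obtain w1 w2 where ww: "w = (w1, w2)" by fastforce
  have y: "lo \<alpha> < y1" "y1 < hi \<alpha>" "gg \<alpha> y1 \<le> y2" using q by (auto simp: qq Delta_iff)
  have c: "?c > 0" using cos_th_pos[OF assms] .
  have tg: "gg \<alpha> y1 - gg \<alpha> x0 \<ge> tan (th \<alpha> x0) * (y1 - x0)" using gg_tangent[OF assms y(1,2)] .
  have "(y2 - gg \<alpha> x0) * ?c \<ge> (tan (th \<alpha> x0) * (y1 - x0)) * ?c"
    using tg y c by (intro mult_right_mono) auto
  also have "(tan (th \<alpha> x0) * (y1 - x0)) * ?c = (y1 - x0) * ?s" using c by (simp add: tan_def)
  finally have t1: "(y1 - x0) * ?s - (y2 - gg \<alpha> x0) * ?c \<le> 0" by simp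
  have cs: "(w1 - y1) * ?s - (w2 - y2) * ?c \<le> dist w q"
  proof -
    have "((w1 - y1) * ?s - (w2 - y2) * ?c)\<^sup>2 \<le> (w1 - y1)\<^sup>2 + (w2 - y2)\<^sup>2"
    proof -
      have "(w1 - y1)\<^sup>2 + (w2 - y2)\<^sup>2 - ((w1 - y1) * ?s - (w2 - y2) * ?c)\<^sup>2
          = ((w1 - y1) * ?c + (w2 - y2) * ?s)\<^sup>2 + ((w1 - y1)\<^sup>2 + (w2 - y2)\<^sup>2) * (1 - ?s\<^sup>2 - ?c\<^sup>2)"
        by (rule cs_ident)
      also have "\<dots> = ((w1 - y1) * ?c + (w2 - y2) * ?s)\<^sup>2"
      proof -
        have z: "1 - ?s\<^sup>2 - ?c\<^sup>2 = 0" using sin_cos_squared_add[of "th \<alpha> x0"] by linarith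
        show ?thesis by (simp only: z mult_zero_right add_0_right)
      qed
      finally show ?thesis by (metis diff_ge_0_iff_ge zero_le_power2)
    qed
    then show ?thesis by (simp add: ww qq dist_pp real_le_rsqrt)
  qed
  have "(fst w - x0) * ?s - (snd w - gg \<alpha> x0) * ?c
      = ((w1 - y1) * ?s - (w2 - y2) * ?c) + ((y1 - x0) * ?s - (y2 - gg \<alpha> x0) * ?c)"
    by (simp add: ww algebra_simps)
  also have "\<dots> \<le> dist w q" using cs t1 by linarith
  finally show ?thesis using q by simp
qed


lemma foot:
  assumes "0 < \<alpha>" "0 < dDelta \<alpha> p"
  shows "\<exists>x0. lo \<alpha> < x0 \<and> x0 < hi \<alpha> \<and>
     p = (x0 + dDelta \<alpha> p * sin (th \<alpha> x0), gg \<alpha> x0 - dDelta \<alpha> p * cos (th \<alpha> x0))"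
proof -
  define d where "d = dDelta \<alpha> p"
  have d0: "0 < d" using assms by (simp add: d_def)
  obtain q where q: "q \<in> Delta \<alpha>" "d = dist p q" using nearest[OF assms(1)] unfolding d_def by blast
  obtain x0 z0 where qq: "q = (x0, z0)" by fastforce
  obtain p1 p2 where pp: "p = (p1, p2)" by fastforce
  have x0: "lo \<alpha> < x0" "x0 < hi \<alpha>" "gg \<alpha> x0 \<le> z0" using q by (auto simp: qq Delta_iff)
  have dmin: "\<And>y. y \<in> Delta \<alpha> \<Longrightarrow> d \<le> dist p y"
    unfolding d_def dDelta_def by (rule infdist_le)
  have z0: "z0 = gg \<alpha> x0"
  proof (rule ccontr)
    assume "z0 \<noteq> gg \<alpha> x0"
    then have "q \<in> Oin \<alpha>" using x0 by (auto simp: qq Oin_def)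
    then obtain e where e: "e > 0" "ball q e \<subseteq> Oin \<alpha>"
      using Oin_open[OF assms(1)] open_contains_ball by blast
    define t where "t = min (1/2) (e / (2*d))"
    have t: "0 < t" "t \<le> 1/2" "t * d < e" using e d0
      by (auto simp: t_def min_def field_simps)
    define w where "w = q + t *\<^sub>R (p - q)"
    have "dist q w = t * d" using t q by (simp add: w_def dist_norm dist_commute)
    then have "w \<in> ball q e" using t by simp
    then have "w \<in> Delta \<alpha>" using e Oin_sub[of \<alpha>] by blast
    moreover have "dist p w = (1 - t) * d"
    proof -
      have "p - w = (1 - t) *\<^sub>R (p - q)" by (simp add: w_def algebra_simps)
      then show ?thesis using t q by (simp add: dist_norm)
    qed
    ultimately have "d \<le> (1 - t) * d" using dmin by fastforce
    moreover have "0 < d * t" using t d0 by simp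
    ultimately show False by (simp add: algebra_simps)
  qed
  let ?s = "sin (th \<alpha> x0)" and ?c = "cos (th \<alpha> x0)"
  have c: "?c > 0" using cos_th_pos[OF assms(1) x0(1,2)] .
  have dq: "d = sqrt ((p1 - x0)\<^sup>2 + (p2 - gg \<alpha> x0)\<^sup>2)" using q by (simp add: pp qq z0 dist_pp)
  define h where "h x = (p1 - x)\<^sup>2 + (p2 - gg \<alpha> x)\<^sup>2" for x
  have hd: "(h has_real_derivative (2 * (p1 - x0) * (-1) + 2 * (p2 - gg \<alpha> x0) * (- tan (th \<alpha> x0)))) (at x0)"
    unfolding h_def
    by (rule derivative_eq_intros gg_deriv[OF assms(1) x0(1,2)] refl)+ (simp add: power2_eq_square)
  have "2 * (p1 - x0) * (-1) + 2 * (p2 - gg \<alpha> x0) * (- tan (th \<alpha> x0)) = 0"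
  proof (rule DERIV_local_min[OF hd])
    show "0 < min (x0 - lo \<alpha>) (hi \<alpha> - x0)" using x0 by auto
    show "\<forall>y. \<bar>x0 - y\<bar> < min (x0 - lo \<alpha>) (hi \<alpha> - x0) \<longrightarrow> h x0 \<le> h y"
    proof safe
      fix y assume "\<bar>x0 - y\<bar> < min (x0 - lo \<alpha>) (hi \<alpha> - x0)"
      then have "(y, gg \<alpha> y) \<in> Delta \<alpha>" by (auto simp: Delta_iff)
      then have "d \<le> sqrt (h y)" using dmin[of "(y, gg \<alpha> y)"] by (simp add: pp dist_pp h_def)
      moreover have "sqrt (h x0) = d" using dq by (simp add: h_def)
      ultimately have "sqrt (h x0) \<le> sqrt (h y)" by simp
      then show "h x0 \<le> h y" by simp
    qed
  qed
  then have foc: "p1 - x0 = (gg \<alpha> x0 - p2) * tan (th \<alpha> x0)" by (simp add: algebra_simps)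
  have below: "p2 \<le> gg \<alpha> x0"
  proof (rule ccontr)
    assume a: "\<not> p2 \<le> gg \<alpha> x0"
    then have "(x0, p2) \<in> Delta \<alpha>" using x0 by (auto simp: Delta_iff)
    then have "d \<le> sqrt ((p1 - x0)\<^sup>2)" using dmin by (fastforce simp: pp dist_pp)
    moreover have "sqrt ((p1 - x0)\<^sup>2) < d" unfolding dq
      using a by (intro real_sqrt_less_mono) (simp add: power2_eq_square)
    ultimately show False by simp
  qed
  define l where "l = gg \<alpha> x0 - p2"
  have l0: "l \<ge> 0" using below by (simp add: l_def)
  have X: "p1 - x0 = l * ?s / ?c" using foc by (simp add: l_def tan_def)
  have "d\<^sup>2 = (p1 - x0)\<^sup>2 + (p2 - gg \<alpha> x0)\<^sup>2" using dq by simp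
  moreover have "(p2 - gg \<alpha> x0)\<^sup>2 = l\<^sup>2" by (simp add: l_def power2_commute)
  ultimately have "d\<^sup>2 = (l * ?s / ?c)\<^sup>2 + l\<^sup>2" using X by simp
  also have "\<dots> = (l / ?c)\<^sup>2 * (?s\<^sup>2 + ?c\<^sup>2)"
  proof -
    have e1: "l\<^sup>2 = (l / ?c)\<^sup>2 * ?c\<^sup>2" using c by (simp add: power_divide)
    have e2: "(l * ?s / ?c)\<^sup>2 = (l / ?c)\<^sup>2 * ?s\<^sup>2" by (simp add: power_mult_distrib power_divide)
    show ?thesis unfolding distrib_left by (subst e1, subst e2) (rule refl)
  qed
  also have "\<dots> = (l / ?c)\<^sup>2" by simp
  finally have "d = l / ?c" using d0 l0 c
    by (metis divide_nonneg_pos less_eq_real_def power2_eq_iff_nonneg)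
  then have ld: "l = d * ?c" using c by (simp add: field_simps)
  have "p1 = x0 + d * ?s" using X ld c by (simp add: field_simps)
  moreover have "p2 = gg \<alpha> x0 - d * ?c" using ld by (simp add: l_def)
  ultimately show ?thesis using x0 unfolding d_def pp by blast
qed



definition W :: "real \<Rightarrow> real \<Rightarrow> real" where "W \<alpha> r = 4*\<alpha>^2 - r^2"
definition f1 :: "real \<Rightarrow> real \<Rightarrow> real" where "f1 \<alpha> r = r / sqrt (W \<alpha> r)"
definition f2 :: "real \<Rightarrow> real \<Rightarrow> real" where "f2 \<alpha> r = 4*\<alpha>^2 / (W \<alpha> r * sqrt (W \<alpha> r))"

lemma W_pos: "0 < \<alpha> \<Longrightarrow> \<bar>r\<bar> < 2*\<alpha> \<Longrightarrow> W \<alpha> r > 0"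
  unfolding W_def
proof -
  assume a: "0 < \<alpha>" "\<bar>r\<bar> < 2*\<alpha>"
  have "r\<^sup>2 < (2*\<alpha>)\<^sup>2" using a by (metis abs_le_square_iff abs_of_pos less_le not_le mult_pos_pos zero_less_numeral power2_abs abs_square_less_1 abs_less_iff le_less_trans)
  then show "4*\<alpha>^2 - r^2 > 0" by (simp add: power_mult_distrib)
qed

lemma sqW_deriv:
  assumes "0 < \<alpha>" "\<bar>r\<bar> < 2*\<alpha>"
  shows "((\<lambda>r. sqrt (W \<alpha> r)) has_real_derivative (- f1 \<alpha> r)) (at r)"
proof -
  have w: "W \<alpha> r > 0" using W_pos[OF assms] .
  have "((\<lambda>r. sqrt (4*\<alpha>^2 - r^2)) has_real_derivative (inverse (sqrt (W \<alpha> r)) / 2 * (0 - 2 * r))) (at r)"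
    by (rule derivative_eq_intros refl | use w in \<open>simp add: W_def\<close>)+
  moreover have "inverse (sqrt (W \<alpha> r)) / 2 * (0 - 2 * r) = - f1 \<alpha> r"
    by (simp add: f1_def field_simps)
  ultimately show ?thesis by (simp add: W_def)
qed

lemma f1_deriv:
  assumes "0 < \<alpha>" "\<bar>r\<bar> < 2*\<alpha>"
  shows "(f1 \<alpha> has_real_derivative f2 \<alpha> r) (at r)"
proof -
  have w: "W \<alpha> r > 0" using W_pos[OF assms] .
  have "((\<lambda>r. r / sqrt (W \<alpha> r)) has_real_derivative
      (1 * sqrt (W \<alpha> r) - r * (- f1 \<alpha> r)) / (sqrt (W \<alpha> r) * sqrt (W \<alpha> r))) (at r)"
    by (rule DERIV_divide DERIV_ident sqW_deriv[OF assms] | use w in simp)+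
  moreover have "(1 * sqrt (W \<alpha> r) - r * (- f1 \<alpha> r)) / (sqrt (W \<alpha> r) * sqrt (W \<alpha> r)) = f2 \<alpha> r"
  proof -
    have s: "sqrt (W \<alpha> r) * sqrt (W \<alpha> r) = W \<alpha> r" using w by simp
    have "(1 * sqrt (W \<alpha> r) - r * (- f1 \<alpha> r)) = (W \<alpha> r + r^2) / sqrt (W \<alpha> r)"
      using w by (simp add: f1_def field_simps power2_eq_square)
    also have "W \<alpha> r + r^2 = 4*\<alpha>^2" by (simp add: W_def)
    finally show ?thesis unfolding s f2_def by (simp add: field_simps)
  qed
  ultimately show ?thesis by (simp add: f1_def[abs_def])
qed

lemma dir_deriv:
  fixes f :: "real \<times> real \<Rightarrow> real"
  assumes "(f has_derivative (\<lambda>h. fst g * fst h + snd g * snd h)) (at (p + t *\<^sub>R v))"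
  shows "((\<lambda>s. f (p + s *\<^sub>R v)) has_real_derivative (fst g * fst v + snd g * snd v)) (at t)"
proof -
  have l: "((\<lambda>s. p + s *\<^sub>R v) has_derivative (\<lambda>s. s *\<^sub>R v)) (at t)"
    by (auto intro!: derivative_eq_intros)
  have D: "((f \<circ> (\<lambda>s. p + s *\<^sub>R v)) has_derivative ((\<lambda>h. fst g * fst h + snd g * snd h) \<circ> (\<lambda>s. s *\<^sub>R v))) (at t)"
    by (rule diff_chain_at[OF l assms])
  have eq: "((\<lambda>h. fst g * fst h + snd g * snd h) \<circ> (\<lambda>s. s *\<^sub>R v)) = (*) (fst g * fst v + snd g * snd v)"
    by (rule ext) (simp add: algebra_simps)
  have eq2: "(f \<circ> (\<lambda>s. p + s *\<^sub>R v)) = (\<lambda>s. f (p + s *\<^sub>R v))" by (simp add: o_def)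
  show ?thesis unfolding has_field_derivative_def using D[unfolded eq eq2] .
qed

lemma dir_deriv2:
  fixes G :: "real \<times> real \<Rightarrow> real \<times> real"
  assumes "(G has_derivative H) (at p)"
  shows "((\<lambda>s. fst (G (p + s *\<^sub>R v)) * a + snd (G (p + s *\<^sub>R v)) * b) has_real_derivative
          (fst (H v) * a + snd (H v) * b)) (at 0)"
proof -
  have l: "((\<lambda>s. p + s *\<^sub>R v) has_derivative (\<lambda>s. s *\<^sub>R v)) (at 0)"
    by (auto intro!: derivative_eq_intros)
  have "((G \<circ> (\<lambda>s. p + s *\<^sub>R v)) has_derivative (H \<circ> (\<lambda>s. s *\<^sub>R v))) (at 0)"
    using diff_chain_at[OF l] assms by simp
  then have d: "((\<lambda>s. G (p + s *\<^sub>R v)) has_derivative (\<lambda>s. s *\<^sub>R H v)) (at 0)"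
    using linear_scale[OF has_derivative_linear[OF assms]] by (simp add: o_def)
  have D: "((\<lambda>s. fst (G (p + s *\<^sub>R v)) * a + snd (G (p + s *\<^sub>R v)) * b) has_derivative
      (\<lambda>s. fst (s *\<^sub>R H v) * a + snd (s *\<^sub>R H v) * b)) (at 0)"
    by (intro has_derivative_add has_derivative_mult_left has_derivative_fst has_derivative_snd d)
  have eq: "(\<lambda>s. fst (s *\<^sub>R H v) * a + snd (s *\<^sub>R H v) * b) = (*) (fst (H v) * a + snd (H v) * b)"
    by (rule ext) (simp add: algebra_simps)
  show ?thesis unfolding has_field_derivative_def using D[unfolded eq] .
qed

lemma second_order:
  fixes e e' :: "real \<Rightarrow> real"
  assumes "\<delta> > 0" "\<And>t. \<bar>t\<bar> < \<delta> \<Longrightarrow> e t \<ge> 0" "e 0 = 0"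
    "\<And>t. \<bar>t\<bar> < \<delta> \<Longrightarrow> (e has_real_derivative e' t) (at t)"
    "(e' has_real_derivative E) (at 0)"
  shows "e' 0 = 0 \<and> E \<ge> 0"
proof
  show e0: "e' 0 = 0"
    by (rule DERIV_local_min[OF assms(4)[of 0] assms(1)]) (use assms in auto)
  show "E \<ge> 0"
  proof (rule ccontr)
    assume "\<not> E \<ge> 0"
    then have E: "E < 0" by simp
    have "((\<lambda>h. (e' (0 + h) - e' 0) / h) \<longlongrightarrow> E) (at 0)" using assms(5) by (simp add: DERIV_def)
    then have "eventually (\<lambda>h. (e' (0 + h) - e' 0) / h < E/2) (at 0)"
      using E by (intro order_tendstoD(2)) auto
    then obtain \<eta> where \<eta>: "\<eta> > 0" "\<And>h. h \<noteq> 0 \<Longrightarrow> dist h 0 < \<eta> \<Longrightarrow> (e' h - e' 0) / h < E/2"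
      unfolding eventually_at by auto
    define t where "t = min \<eta> \<delta> / 2"
    have t: "0 < t" "t < \<eta>" "t < \<delta>" using \<eta> assms(1) by (auto simp: t_def)
    have neg: "e' x < 0" if "0 < x" "x \<le> t" for x
    proof -
      have "e' x / x < E/2" using \<eta>(2)[of x] that t e0 by auto
      then have "e' x / x < 0" using E by linarith
      then show ?thesis using that by (simp add: divide_less_0_iff)
    qed
    obtain z where z: "0 < z" "z < t" "e t - e 0 = (t - 0) * e' z"
      using MVT2[of 0 t e e'] t assms(4) by fastforce
    have "e t < 0" using z neg[of z] t assms(3) by (simp add: mult_pos_neg)
    moreover have "e t \<ge> 0" using assms(2) t by auto
    ultimately show False by simp
  qed
qed


lemma d_lt:
  assumes "0 < \<alpha>" "U \<subseteq> phiDom \<alpha>" "p \<in> U"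
    "\<forall>q\<in>U. (phi \<alpha> has_derivative (\<lambda>h. fst (G q) * fst h + snd (G q) * snd h)) (at q)"
  shows "dDelta \<alpha> p < 2*\<alpha>"
proof (rule ccontr)
  assume "\<not> dDelta \<alpha> p < 2*\<alpha>"
  then have d: "dDelta \<alpha> p = 2*\<alpha>" using phiDom_le[of p \<alpha>] assms by auto
  obtain q where q: "q \<in> Delta \<alpha>" "dDelta \<alpha> p = dist p q" using nearest[OF assms(1)] by blast
  define v where "v = (1/(2*\<alpha>)) *\<^sub>R (q - p)"
  have nqp: "norm (q - p) = 2*\<alpha>" using q d by (simp add: dist_norm norm_minus_commute)
  have nv: "norm v = 1" using nqp assms(1) by (simp add: v_def)
  have dl: "dDelta \<alpha> (p + t *\<^sub>R v) = 2*\<alpha> - t" if t: "0 \<le> t" "t \<le> 2*\<alpha>" for t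
  proof (rule antisym)
    have "q - (p + t *\<^sub>R v) = (1 - t/(2*\<alpha>)) *\<^sub>R (q - p)" using assms(1)
      by (simp add: v_def algebra_simps)
    moreover have "1 - t/(2*\<alpha>) \<ge> 0" using t assms(1) by simp
    ultimately have "dist (p + t *\<^sub>R v) q = (1 - t/(2*\<alpha>)) * (2*\<alpha>)"
      using nqp by (simp add: dist_norm norm_minus_commute[of "p + t *\<^sub>R v"])
    also have "\<dots> = 2*\<alpha> - t" using assms(1) by (simp add: field_simps)
    finally show "dDelta \<alpha> (p + t *\<^sub>R v) \<le> 2*\<alpha> - t"
      unfolding dDelta_def using infdist_le[OF q(1)] by metis
    have "dDelta \<alpha> p \<le> dDelta \<alpha> (p + t *\<^sub>R v) + dist p (p + t *\<^sub>R v)"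
      unfolding dDelta_def by (rule infdist_triangle)
    moreover have "dist p (p + t *\<^sub>R v) = t" using nv t by (simp add: dist_norm)
    ultimately show "2*\<alpha> - t \<le> dDelta \<alpha> (p + t *\<^sub>R v)" using d by simp
  qed
  define \<Phi> where "\<Phi> t = phi \<alpha> (p + t *\<^sub>R v)" for t
  define D where "D = fst (G p) * fst v + snd (G p) * snd v"
  have "(\<Phi> has_real_derivative D) (at 0)"
    unfolding \<Phi>_def D_def by (rule dir_deriv) (use assms(3,4) in simp)
  then have "((\<lambda>h. (\<Phi> (0 + h) - \<Phi> 0) / h) \<longlongrightarrow> D) (at 0)" by (simp add: DERIV_def)
  then have "eventually (\<lambda>h. (\<Phi> (0 + h) - \<Phi> 0) / h > D - 1) (at 0)"
    by (intro order_tendstoD(1)) auto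
  then obtain \<eta> where \<eta>: "\<eta> > 0" "\<And>h. h \<noteq> 0 \<Longrightarrow> dist h 0 < \<eta> \<Longrightarrow> (\<Phi> h - \<Phi> 0) / h > D - 1"
    unfolding eventually_at by auto
  define B where "B = (1 - D)\<^sup>2 + 1"
  have B: "B > 0" by (simp add: B_def add_nonneg_pos)
  define t where "t = min \<eta> (min (2*\<alpha>) (4*\<alpha>/B)) / 2"
  have m: "min \<eta> (min (2*\<alpha>) (4*\<alpha>/B)) \<le> 4*\<alpha>/B" "min \<eta> (min (2*\<alpha>) (4*\<alpha>/B)) \<le> 2*\<alpha>"
    "min \<eta> (min (2*\<alpha>) (4*\<alpha>/B)) \<le> \<eta>" "0 < min \<eta> (min (2*\<alpha>) (4*\<alpha>/B))"
    using \<eta> assms(1) B by auto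
  have t: "0 < t" "t < \<eta>" "t \<le> 2*\<alpha>" "t < 4*\<alpha>/B" using m unfolding t_def by linarith+
  have Phi0: "\<Phi> 0 = -1 + 2*\<alpha>" unfolding \<Phi>_def phi_def using d by (simp add: power_mult_distrib)
  define S where "S = 4*\<alpha>*t - t\<^sup>2"
  have S0: "S \<ge> 0" using t by (simp add: S_def power2_eq_square algebra_simps mult_right_mono)
  have Phit: "\<Phi> t = -1 + 2*\<alpha> - sqrt S"
    unfolding \<Phi>_def phi_def dl[OF less_imp_le[OF t(1)] t(3)] S_def
    by (simp add: power2_eq_square algebra_simps)
  have "(\<Phi> t - \<Phi> 0) / t > D - 1" using \<eta>(2)[of t] t by auto
  then have qq: "(- sqrt S) / t > D - 1" using Phi0 Phit by simp
  have "- sqrt S > (D - 1) * t" using pos_less_divide_eq[OF t(1), of "D - 1" "- sqrt S"] qq by blast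
  then have lt: "sqrt S < (1 - D) * t" by (simp add: algebra_simps)
  then have "(sqrt S)\<^sup>2 < ((1 - D) * t)\<^sup>2" using real_sqrt_ge_zero[OF S0] by (intro power_strict_mono) auto
  then have "S < (1 - D)\<^sup>2 * t\<^sup>2" using S0 by (simp add: power_mult_distrib)
  then have "t * (4*\<alpha>) < t * (B * t)" by (simp add: S_def B_def power2_eq_square algebra_simps)
  then have "4*\<alpha> < B * t" using t(1) by simp
  moreover have "B * t < 4*\<alpha>" using t(4) B by (simp add: pos_less_divide_eq mult.commute)
  ultimately show False by simp
qed



lemma phi_W: "phi \<alpha> p = -1 + 2*\<alpha> - sqrt (W \<alpha> (dDelta \<alpha> p))"
  by (simp add: phi_def W_def)

lemma cmp2:
  fixes G :: "real \<times> real \<Rightarrow> real \<times> real"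
  assumes \<alpha>: "0 < \<alpha>" and d: "0 < d" "d < 2*\<alpha>" and \<delta>: "\<delta> > 0"
    and dG: "\<And>t. \<bar>t\<bar> < \<delta> \<Longrightarrow> (phi \<alpha> has_derivative (\<lambda>h. fst (G (p + t *\<^sub>R v)) * fst h + snd (G (p + t *\<^sub>R v)) * snd h)) (at (p + t *\<^sub>R v))"
    and rng: "\<And>t. \<bar>t\<bar> < \<delta> \<Longrightarrow> \<bar>d + t * a\<bar> < 2*\<alpha>"
    and cmp: "\<And>t. \<bar>t\<bar> < \<delta> \<Longrightarrow> \<sigma> * (phi \<alpha> (p + t *\<^sub>R v) - (-1 + 2*\<alpha> - sqrt (W \<alpha> (d + t * a)))) \<ge> 0"
    and p: "dDelta \<alpha> p = d" and \<sigma>: "\<sigma> \<noteq> 0"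
  shows "fst (G p) * fst v + snd (G p) * snd v = a * f1 \<alpha> d"
    and "(G has_derivative H) (at p) \<Longrightarrow> \<sigma> * ((fst (H v) * fst v + snd (H v) * snd v) - a * a * f2 \<alpha> d) \<ge> 0"
proof -
  define e where "e t = \<sigma> * (phi \<alpha> (p + t *\<^sub>R v) - (-1 + 2*\<alpha> - sqrt (W \<alpha> (d + t * a))))" for t
  define e' where "e' t = \<sigma> * ((fst (G (p + t *\<^sub>R v)) * fst v + snd (G (p + t *\<^sub>R v)) * snd v) - a * f1 \<alpha> (d + t * a))" for t
  have e0: "e 0 = 0" unfolding e_def using p by (simp add: phi_W)
  have ed: "(e has_real_derivative e' t) (at t)" if t: "\<bar>t\<bar> < \<delta>" for t
  proof -
    have c: "((\<lambda>t. sqrt (W \<alpha> (d + t * a))) has_real_derivative (- f1 \<alpha> (d + t * a)) * a) (at t)"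
      by (rule DERIV_chain2[where g="\<lambda>t. d + t * a" and x=t, OF sqW_deriv[OF \<alpha> rng[OF t]]]) (auto intro!: derivative_eq_intros)
    show ?thesis unfolding e_def e'_def
      by (rule derivative_eq_intros dir_deriv[OF dG[OF t]] c refl | simp add: algebra_simps)+
  qed
  have "e' 0 = 0"
    by (rule DERIV_local_min[OF ed[of 0] \<delta>]) (use \<delta> e0 cmp in \<open>auto simp: e_def\<close>)
  then show "fst (G p) * fst v + snd (G p) * snd v = a * f1 \<alpha> d" using \<sigma> by (simp add: e'_def)
  assume H: "(G has_derivative H) (at p)"
  have "(e' has_real_derivative \<sigma> * ((fst (H v) * fst v + snd (H v) * snd v) - a * (f2 \<alpha> (d + 0 * a) * a))) (at 0)"
  proof -
    have c: "((\<lambda>t. f1 \<alpha> (d + t * a)) has_real_derivative f2 \<alpha> (d + 0 * a) * a) (at 0)"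
      by (rule DERIV_chain2[where g="\<lambda>t. d + t * a" and x=0, OF f1_deriv[OF \<alpha>]]) (use rng[of 0] \<delta> in \<open>auto intro!: derivative_eq_intros\<close>)
    show ?thesis unfolding e'_def
      by (intro DERIV_cmult DERIV_diff dir_deriv2[OF H] c)
  qed
  then have "(e' has_real_derivative \<sigma> * ((fst (H v) * fst v + snd (H v) * snd v) - a * a * f2 \<alpha> d)) (at 0)"
    by (simp add: algebra_simps)
  from second_order[OF \<delta> _ e0 ed this] show "\<sigma> * ((fst (H v) * fst v + snd (H v) * snd v) - a * a * f2 \<alpha> d) \<ge> 0"
    using cmp unfolding e_def by blast
qed



definition uu :: "real \<Rightarrow> real \<Rightarrow> real \<Rightarrow> real" where
  "uu \<alpha> x0 t = gg \<alpha> (x0 + t * cos (th \<alpha> x0)) - gg \<alpha> x0 - t * sin (th \<alpha> x0)"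
definition uu' :: "real \<Rightarrow> real \<Rightarrow> real \<Rightarrow> real" where
  "uu' \<alpha> x0 t = tan (th \<alpha> (x0 + t * cos (th \<alpha> x0))) * cos (th \<alpha> x0) - sin (th \<alpha> x0)"
definition RR :: "real \<Rightarrow> real \<Rightarrow> real \<Rightarrow> real \<Rightarrow> real" where
  "RR \<alpha> x0 d t = d\<^sup>2 * (sin (th \<alpha> x0))\<^sup>2 + (d * cos (th \<alpha> x0) + uu \<alpha> x0 t)\<^sup>2"

lemma uu_0: "uu \<alpha> x0 0 = 0" by (simp add: uu_def)

lemma uu'_0: assumes "0 < \<alpha>" "lo \<alpha> < x0" "x0 < hi \<alpha>" shows "uu' \<alpha> x0 0 = 0"
  using cos_th_pos[OF assms] by (simp add: uu'_def tan_def)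

lemma uu_deriv:
  assumes "0 < \<alpha>" "lo \<alpha> < x0 + t * cos (th \<alpha> x0)" "x0 + t * cos (th \<alpha> x0) < hi \<alpha>"
  shows "(uu \<alpha> x0 has_real_derivative uu' \<alpha> x0 t) (at t)"
proof -
  have g: "((\<lambda>t. gg \<alpha> (x0 + t * cos (th \<alpha> x0))) has_real_derivative
      tan (th \<alpha> (x0 + t * cos (th \<alpha> x0))) * cos (th \<alpha> x0)) (at t)"
    by (rule DERIV_chain2[where g="\<lambda>t. x0 + t * cos (th \<alpha> x0)", OF gg_deriv[OF assms]])
       (auto intro!: derivative_eq_intros)
  show ?thesis unfolding uu_def[abs_def] uu'_def
    by (rule derivative_eq_intros g refl | simp)+
qed

lemma uu'_deriv0:
  assumes "0 < \<alpha>" "lo \<alpha> < x0" "x0 < hi \<alpha>"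
  shows "(uu' \<alpha> x0 has_real_derivative \<alpha>*pi/2) (at 0)"
proof -
  have c: "cos (th \<alpha> x0) > 0" using cos_th_pos[OF assms] .
  have t: "((\<lambda>t. tan (th \<alpha> (x0 + t * cos (th \<alpha> x0)))) has_real_derivative
      inverse ((cos (th \<alpha> (x0 + 0 * cos (th \<alpha> x0))))\<^sup>2) * (\<alpha>*pi/2 * cos (th \<alpha> x0))) (at 0)"
  proof (rule DERIV_chain2[where g="\<lambda>t. th \<alpha> (x0 + t * cos (th \<alpha> x0))", OF DERIV_tan])
    show "cos (th \<alpha> (x0 + 0 * cos (th \<alpha> x0))) \<noteq> 0" using c by simp
    show "((\<lambda>t. th \<alpha> (x0 + t * cos (th \<alpha> x0))) has_real_derivative \<alpha> * pi / 2 * cos (th \<alpha> x0)) (at 0)"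
      by (rule DERIV_chain2[where g="\<lambda>t. x0 + t * cos (th \<alpha> x0)", OF th_deriv])
         (auto intro!: derivative_eq_intros)
  qed
  have D: "(uu' \<alpha> x0 has_real_derivative
      inverse ((cos (th \<alpha> (x0 + 0 * cos (th \<alpha> x0))))\<^sup>2) * (\<alpha>*pi/2 * cos (th \<alpha> x0)) * cos (th \<alpha> x0)) (at 0)"
    unfolding uu'_def[abs_def] by (rule derivative_eq_intros t refl | simp)+
  have i: "inverse ((cos (th \<alpha> x0))\<^sup>2) * (cos (th \<alpha> x0))\<^sup>2 = 1" using c by simp
  have "inverse ((cos (th \<alpha> x0))\<^sup>2) * (\<alpha>*pi/2 * cos (th \<alpha> x0)) * cos (th \<alpha> x0)
     = (\<alpha>*pi/2) * (inverse ((cos (th \<alpha> x0))\<^sup>2) * (cos (th \<alpha> x0))\<^sup>2)"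
    by (simp add: power2_eq_square algebra_simps)
  then have eq: "inverse ((cos (th \<alpha> (x0 + 0 * cos (th \<alpha> x0))))\<^sup>2) * (\<alpha>*pi/2 * cos (th \<alpha> x0)) * cos (th \<alpha> x0) = \<alpha>*pi/2"
    unfolding i by simp
  show ?thesis using D unfolding eq .
qed

lemma RR_0: "RR \<alpha> x0 d 0 = d\<^sup>2"
proof -
  have "RR \<alpha> x0 d 0 = d\<^sup>2 * (sin (th \<alpha> x0))\<^sup>2 + d\<^sup>2 * (cos (th \<alpha> x0))\<^sup>2"
    by (simp add: RR_def uu_0 power_mult_distrib)
  also have "\<dots> = d\<^sup>2 * ((sin (th \<alpha> x0))\<^sup>2 + (cos (th \<alpha> x0))\<^sup>2)" by (rule distrib_left[symmetric])
  also have "\<dots> = d\<^sup>2" by simp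
  finally show ?thesis .
qed

lemma RR_deriv:
  assumes "0 < \<alpha>" "lo \<alpha> < x0 + t * cos (th \<alpha> x0)" "x0 + t * cos (th \<alpha> x0) < hi \<alpha>"
  shows "(RR \<alpha> x0 d has_real_derivative 2 * (d * cos (th \<alpha> x0) + uu \<alpha> x0 t) * uu' \<alpha> x0 t) (at t)"
  unfolding RR_def[abs_def]
  by (rule derivative_eq_intros uu_deriv[OF assms] refl | simp)+

lemma dist_RR:
  assumes "0 < \<alpha>" "lo \<alpha> < x0 + t * cos (th \<alpha> x0)" "x0 + t * cos (th \<alpha> x0) < hi \<alpha>"
  shows "dDelta \<alpha> ((x0 + d * sin (th \<alpha> x0), gg \<alpha> x0 - d * cos (th \<alpha> x0)) + t *\<^sub>R (cos (th \<alpha> x0), sin (th \<alpha> x0)))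
     \<le> sqrt (RR \<alpha> x0 d t)"
proof -
  let ?Y = "(x0 + t * cos (th \<alpha> x0), gg \<alpha> (x0 + t * cos (th \<alpha> x0)))"
  have Y: "?Y \<in> Delta \<alpha>" using assms by (simp add: Delta_iff)
  have "dist ((x0 + d * sin (th \<alpha> x0), gg \<alpha> x0 - d * cos (th \<alpha> x0)) + t *\<^sub>R (cos (th \<alpha> x0), sin (th \<alpha> x0))) ?Y
      = sqrt (RR \<alpha> x0 d t)"
  proof -
    have "(x0 + d * sin (th \<alpha> x0) + t * cos (th \<alpha> x0) - (x0 + t * cos (th \<alpha> x0)))\<^sup>2 = d\<^sup>2 * (sin (th \<alpha> x0))\<^sup>2"
      by (simp add: power_mult_distrib)
    moreover have "(gg \<alpha> x0 - d * cos (th \<alpha> x0) + t * sin (th \<alpha> x0) - gg \<alpha> (x0 + t * cos (th \<alpha> x0)))\<^sup>2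
        = (d * cos (th \<alpha> x0) + uu \<alpha> x0 t)\<^sup>2"
    proof -
      have "gg \<alpha> x0 - d * cos (th \<alpha> x0) + t * sin (th \<alpha> x0) - gg \<alpha> (x0 + t * cos (th \<alpha> x0))
          = - (d * cos (th \<alpha> x0) + uu \<alpha> x0 t)" by (simp add: uu_def)
      then show ?thesis by (metis power2_minus)
    qed
    ultimately show ?thesis by (simp add: dist_pp RR_def)
  qed
  then show ?thesis unfolding dDelta_def using infdist_le[OF Y] by metis
qed



definition P2' :: "real \<Rightarrow> real \<Rightarrow> real \<Rightarrow> real \<Rightarrow> real" where
  "P2' \<alpha> x0 d t = (d * cos (th \<alpha> x0) + uu \<alpha> x0 t) * uu' \<alpha> x0 t / sqrt (4*\<alpha>^2 - RR \<alpha> x0 d t)"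

lemma Psi2_deriv:
  assumes "0 < \<alpha>" "lo \<alpha> < x0 + t * cos (th \<alpha> x0)" "x0 + t * cos (th \<alpha> x0) < hi \<alpha>"
    "RR \<alpha> x0 d t < 4*\<alpha>^2"
  shows "((\<lambda>t. -1 + 2*\<alpha> - sqrt (4*\<alpha>^2 - RR \<alpha> x0 d t)) has_real_derivative P2' \<alpha> x0 d t) (at t)"
proof -
  have D: "((\<lambda>t. -1 + 2*\<alpha> - sqrt (4*\<alpha>^2 - RR \<alpha> x0 d t)) has_real_derivative
     - (inverse (sqrt (4*\<alpha>^2 - RR \<alpha> x0 d t)) / 2 * (0 - 2 * (d * cos (th \<alpha> x0) + uu \<alpha> x0 t) * uu' \<alpha> x0 t))) (at t)"
    by (rule derivative_eq_intros RR_deriv[OF assms(1-3)] refl | use assms(4) in simp)+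
  have "- (inverse (sqrt (4*\<alpha>^2 - RR \<alpha> x0 d t)) / 2 * (0 - 2 * (d * cos (th \<alpha> x0) + uu \<alpha> x0 t) * uu' \<alpha> x0 t))
      = P2' \<alpha> x0 d t"
  proof -
    have "sqrt (4*\<alpha>^2 - RR \<alpha> x0 d t) > 0" using assms(4) by simp
    then show ?thesis by (simp add: P2'_def field_simps)
  qed
  then show ?thesis using D by simp
qed

lemma P2'_deriv0:
  assumes "0 < \<alpha>" "lo \<alpha> < x0" "x0 < hi \<alpha>" "0 < d" "d < 2*\<alpha>"
  shows "(P2' \<alpha> x0 d has_real_derivative f1 \<alpha> d * (\<alpha>*pi/2) * cos (th \<alpha> x0)) (at 0)"
proof -
  let ?c = "cos (th \<alpha> x0)"
  have x00: "lo \<alpha> < x0 + 0 * ?c" "x0 + 0 * ?c < hi \<alpha>" using assms by auto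
  have W: "W \<alpha> d > 0" using W_pos[of \<alpha> d] assms by simp
  have R0: "4*\<alpha>^2 - RR \<alpha> x0 d 0 = W \<alpha> d" by (simp add: RR_0 W_def)
  have N: "((\<lambda>t. (d * ?c + uu \<alpha> x0 t) * uu' \<alpha> x0 t) has_real_derivative
      (uu' \<alpha> x0 0 * uu' \<alpha> x0 0 + (d * ?c + uu \<alpha> x0 0) * (\<alpha>*pi/2))) (at 0)"
    by (rule derivative_eq_intros uu_deriv[OF assms(1) x00] uu'_deriv0[OF assms(1-3)] refl | simp add: algebra_simps)+
  have S: "((\<lambda>t. sqrt (4*\<alpha>^2 - RR \<alpha> x0 d t)) has_real_derivative
      inverse (sqrt (4*\<alpha>^2 - RR \<alpha> x0 d 0)) / 2 * (0 - 2 * (d * ?c + uu \<alpha> x0 0) * uu' \<alpha> x0 0)) (at 0)"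
    by (rule derivative_eq_intros RR_deriv[OF assms(1) x00] refl | use W R0 in simp)+
  have D: "(P2' \<alpha> x0 d has_real_derivative
     ((uu' \<alpha> x0 0 * uu' \<alpha> x0 0 + (d * ?c + uu \<alpha> x0 0) * (\<alpha>*pi/2)) * sqrt (4*\<alpha>^2 - RR \<alpha> x0 d 0)
      - (d * ?c + uu \<alpha> x0 0) * uu' \<alpha> x0 0 * (inverse (sqrt (4*\<alpha>^2 - RR \<alpha> x0 d 0)) / 2 * (0 - 2 * (d * ?c + uu \<alpha> x0 0) * uu' \<alpha> x0 0)))
      / (sqrt (4*\<alpha>^2 - RR \<alpha> x0 d 0) * sqrt (4*\<alpha>^2 - RR \<alpha> x0 d 0))) (at 0)"
    unfolding P2'_def[abs_def] by (rule DERIV_divide[OF N S]) (use W R0 in simp)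
  have "((uu' \<alpha> x0 0 * uu' \<alpha> x0 0 + (d * ?c + uu \<alpha> x0 0) * (\<alpha>*pi/2)) * sqrt (4*\<alpha>^2 - RR \<alpha> x0 d 0)
      - (d * ?c + uu \<alpha> x0 0) * uu' \<alpha> x0 0 * (inverse (sqrt (4*\<alpha>^2 - RR \<alpha> x0 d 0)) / 2 * (0 - 2 * (d * ?c + uu \<alpha> x0 0) * uu' \<alpha> x0 0)))
      / (sqrt (4*\<alpha>^2 - RR \<alpha> x0 d 0) * sqrt (4*\<alpha>^2 - RR \<alpha> x0 d 0))
      = (d * ?c * (\<alpha>*pi/2)) * sqrt (W \<alpha> d) / (sqrt (W \<alpha> d) * sqrt (W \<alpha> d))"
    unfolding R0 uu_0 uu'_0[OF assms(1-3)] by simp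
  also have "\<dots> = f1 \<alpha> d * (\<alpha>*pi/2) * ?c" using W by (simp add: f1_def field_simps)
  finally have eq: "((uu' \<alpha> x0 0 * uu' \<alpha> x0 0 + (d * ?c + uu \<alpha> x0 0) * (\<alpha>*pi/2)) * sqrt (4*\<alpha>^2 - RR \<alpha> x0 d 0)
      - (d * ?c + uu \<alpha> x0 0) * uu' \<alpha> x0 0 * (inverse (sqrt (4*\<alpha>^2 - RR \<alpha> x0 d 0)) / 2 * (0 - 2 * (d * ?c + uu \<alpha> x0 0) * uu' \<alpha> x0 0)))
      / (sqrt (4*\<alpha>^2 - RR \<alpha> x0 d 0) * sqrt (4*\<alpha>^2 - RR \<alpha> x0 d 0)) = f1 \<alpha> d * (\<alpha>*pi/2) * ?c" .
  show ?thesis using D unfolding eq .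
qed

lemma Psi3_deriv0:
  assumes "0 < \<alpha>" "lo \<alpha> < x0" "x0 < hi \<alpha>" "0 < d" "d < 2*\<alpha>"
  shows "((\<lambda>t. f1 \<alpha> (sqrt (RR \<alpha> x0 d t))) has_real_derivative 0) (at 0)"
proof -
  let ?c = "cos (th \<alpha> x0)"
  have x00: "lo \<alpha> < x0 + 0 * ?c" "x0 + 0 * ?c < hi \<alpha>" using assms by auto
  have s0: "sqrt (RR \<alpha> x0 d 0) = d" using assms by (simp add: RR_0)
  have R: "(RR \<alpha> x0 d has_real_derivative 0) (at 0)"
    using RR_deriv[OF assms(1) x00, of d] by (simp add: uu'_0[OF assms(1-3)])
  have Sq: "((\<lambda>t. sqrt (RR \<alpha> x0 d t)) has_real_derivative inverse (sqrt (RR \<alpha> x0 d 0)) / 2 * 0) (at 0)"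
    by (rule DERIV_chain2[where g="RR \<alpha> x0 d", OF DERIV_real_sqrt R]) (use assms in \<open>simp add: RR_0\<close>)
  have "((\<lambda>t. f1 \<alpha> (sqrt (RR \<alpha> x0 d t))) has_real_derivative f2 \<alpha> (sqrt (RR \<alpha> x0 d 0)) * (inverse (sqrt (RR \<alpha> x0 d 0)) / 2 * 0)) (at 0)"
    by (rule DERIV_chain2[where g="\<lambda>t. sqrt (RR \<alpha> x0 d t)", OF f1_deriv[OF assms(1)] Sq]) (use assms s0 in simp)
  then show ?thesis by simp
qed

lemma f1_mono:
  assumes "0 < \<alpha>" "0 \<le> a" "a \<le> b" "b < 2*\<alpha>"
  shows "f1 \<alpha> a \<le> f1 \<alpha> b"
proof -
  have Wb: "W \<alpha> b > 0" using W_pos[of \<alpha> b] assms by simp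
  have "a\<^sup>2 \<le> b\<^sup>2" by (rule power_mono) (use assms in auto)
  then have "W \<alpha> b \<le> W \<alpha> a" unfolding W_def by linarith
  then have s: "sqrt (W \<alpha> b) \<le> sqrt (W \<alpha> a)" by (rule real_sqrt_le_mono)
  have sb: "0 < sqrt (W \<alpha> b)" using Wb by simp
  have Wa: "W \<alpha> a > 0" using W_pos[of \<alpha> a] assms by simp
  have "a / sqrt (W \<alpha> a) \<le> b / sqrt (W \<alpha> a)" by (rule divide_right_mono) (use assms Wa in auto)
  also have "\<dots> \<le> b / sqrt (W \<alpha> b)"
    by (rule divide_left_mono[OF s]) (use assms sb s in auto)
  finally show ?thesis unfolding f1_def .
qed

lemma f1_nonneg: "0 < \<alpha> \<Longrightarrow> 0 \<le> a \<Longrightarrow> a < 2*\<alpha> \<Longrightarrow> 0 \<le> f1 \<alpha> a"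
  using W_pos[of \<alpha> a] unfolding f1_def by (intro divide_nonneg_nonneg) auto

lemma linH:
  fixes G H :: "real \<times> real \<Rightarrow> real \<times> real" and v :: "real \<times> real"
  assumes "(G has_derivative H) (at p)"
  shows "H v = (fst (H (1,0)) * fst v + fst (H (0,1)) * snd v, snd (H (1,0)) * fst v + snd (H (0,1)) * snd v)"
proof -
  have l: "linear H" using has_derivative_linear[OF assms] .
  obtain x y where v: "v = (x, y)" by fastforce
  have "v = x *\<^sub>R (1,0) + y *\<^sub>R (0,1)" unfolding v by simp
  then have "H v = x *\<^sub>R H (1,0) + y *\<^sub>R H (0,1)"
    using linear_add[OF l] linear_scale[OF l] by metis
  moreover obtain a1 a2 where "H (1,0) = (a1, a2)" by fastforce
  moreover obtain b1 b2 where "H (0,1) = (b1, b2)" by fastforce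
  ultimately show ?thesis unfolding v by (simp add: algebra_simps)
qed

lemma det_rot:
  fixes a11 a12 a21 a22 ss cc :: real
  assumes "ss\<^sup>2 + cc\<^sup>2 = 1"
  shows "a11 * a22 - a21 * a12 =
    ((a11 * ss + a12 * (-cc)) * ss + (a21 * ss + a22 * (-cc)) * (-cc)) * ((a11 * cc + a12 * ss) * cc + (a21 * cc + a22 * ss) * ss)
  - ((a11 * cc + a12 * ss) * ss + (a21 * cc + a22 * ss) * (-cc)) * ((a11 * ss + a12 * (-cc)) * cc + (a21 * ss + a22 * (-cc)) * ss)"
proof -
  have "((a11 * ss + a12 * (-cc)) * ss + (a21 * ss + a22 * (-cc)) * (-cc)) * ((a11 * cc + a12 * ss) * cc + (a21 * cc + a22 * ss) * ss)
  - ((a11 * cc + a12 * ss) * ss + (a21 * cc + a22 * ss) * (-cc)) * ((a11 * ss + a12 * (-cc)) * cc + (a21 * ss + a22 * (-cc)) * ss)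
   = (a11 * a22 - a21 * a12) * (ss\<^sup>2 + cc\<^sup>2)\<^sup>2"
    by (simp add: power2_eq_square algebra_simps)
  then show ?thesis using assms by simp
qed



lemma delta_ex:
  fixes w v :: "real \<times> real"
  assumes "open U" "w \<in> U" "0 < d" "d < 2*\<alpha>"
  shows "\<exists>\<delta>>0. \<forall>t. \<bar>t\<bar> < \<delta> \<longrightarrow> w + t *\<^sub>R v \<in> U \<and> 0 < d + t*a \<and> d + t*a < 2*\<alpha>"
proof -
  obtain e where e: "e > 0" "ball w e \<subseteq> U" using assms(1,2) open_contains_ball by blast
  define \<delta> where "\<delta> = min (e/(norm v+1)) (min (d/(\<bar>a\<bar>+1)) ((2*\<alpha>-d)/(\<bar>a\<bar>+1)))"
  have n1: "norm v + 1 > 0" by (simp add: add_nonneg_pos)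
  have "0 < e/(norm v+1)" using e n1 by simp
  moreover have "0 < d/(\<bar>a\<bar>+1)" "0 < (2*\<alpha>-d)/(\<bar>a\<bar>+1)" using assms by (simp_all add: add_nonneg_pos)
  ultimately have \<delta>0: "\<delta> > 0" by (simp add: \<delta>_def)
  have "w + t *\<^sub>R v \<in> U \<and> 0 < d + t*a \<and> d + t*a < 2*\<alpha>" if t: "\<bar>t\<bar> < \<delta>" for t
  proof -
    have t1: "\<bar>t\<bar> < e/(norm v+1)" "\<bar>t\<bar> < d/(\<bar>a\<bar>+1)" "\<bar>t\<bar> < (2*\<alpha>-d)/(\<bar>a\<bar>+1)"
      using t by (auto simp: \<delta>_def)
    have n1: "norm v + 1 > 0" by (simp add: add_nonneg_pos)
    have a1: "\<bar>a\<bar> + 1 > 0" by (simp add: add_nonneg_pos)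
    have "\<bar>t\<bar> * (norm v + 1) < e" using t1(1) n1 by (simp add: pos_less_divide_eq)
    moreover have "norm (t *\<^sub>R v) \<le> \<bar>t\<bar> * (norm v + 1)" by (simp add: mult_left_mono)
    ultimately have "dist w (w + t *\<^sub>R v) < e" by (simp add: dist_norm)
    then have "w + t *\<^sub>R v \<in> U" using e by auto
    moreover have "\<bar>t * a\<bar> \<le> \<bar>t\<bar> * (\<bar>a\<bar> + 1)" by (simp add: abs_mult mult_left_mono)
    moreover have "\<bar>t\<bar> * (\<bar>a\<bar> + 1) < d" "\<bar>t\<bar> * (\<bar>a\<bar> + 1) < 2*\<alpha> - d"
      using t1(2,3) a1 by (simp_all add: pos_less_divide_eq)
    ultimately show ?thesis by (smt (verit))
  qed
  then show ?thesis using \<delta>0 by blast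
qed

lemma ell:
  assumes "s\<^sup>2 + c\<^sup>2 = 1" "w = (x0 + d * s, g0 - d * c)"
  shows "(fst (w + t *\<^sub>R v) - x0) * s - (snd (w + t *\<^sub>R v) - g0) * c = d + t * (fst v * s - snd v * c)"
proof -
  have "(fst (w + t *\<^sub>R v) - x0) * s - (snd (w + t *\<^sub>R v) - g0) * c = d * (s\<^sup>2 + c\<^sup>2) + t * (fst v * s - snd v * c)"
    using assms(2) by (simp add: power2_eq_square algebra_simps)
  then show ?thesis using assms(1) by simp
qed


lemma lower_cmp:
  fixes G H :: "real \<times> real \<Rightarrow> real \<times> real" and v :: "real \<times> real"
  assumes \<alpha>: "0 < \<alpha>" and oU: "open U"
    and dG: "\<forall>q\<in>U. (phi \<alpha> has_derivative (\<lambda>h. fst (G q) * fst h + snd (G q) * snd h)) (at q)"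
    and wU: "w \<in> U" and x0: "lo \<alpha> < x0" "x0 < hi \<alpha>" and d: "0 < d" "d < 2*\<alpha>"
    and wd: "w = (x0 + d * sin (th \<alpha> x0), gg \<alpha> x0 - d * cos (th \<alpha> x0))" and dw: "dDelta \<alpha> w = d"
  shows "fst (G w) * fst v + snd (G w) * snd v = (fst v * sin (th \<alpha> x0) - snd v * cos (th \<alpha> x0)) * f1 \<alpha> d"
    and "(G has_derivative H) (at w) \<Longrightarrow> (fst (H v) * fst v + snd (H v) * snd v)
        - (fst v * sin (th \<alpha> x0) - snd v * cos (th \<alpha> x0)) * (fst v * sin (th \<alpha> x0) - snd v * cos (th \<alpha> x0)) * f2 \<alpha> d \<ge> 0"
proof -
  define a where "a = fst v * sin (th \<alpha> x0) - snd v * cos (th \<alpha> x0)"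
  obtain \<delta> where \<delta>: "\<delta> > 0" "\<forall>t. \<bar>t\<bar> < \<delta> \<longrightarrow> w + t *\<^sub>R v \<in> U \<and> 0 < d + t*a \<and> d + t*a < 2*\<alpha>"
    using delta_ex[OF oU wU d] by blast
  have dG': "(phi \<alpha> has_derivative (\<lambda>h. fst (G (w + t *\<^sub>R v)) * fst h + snd (G (w + t *\<^sub>R v)) * snd h)) (at (w + t *\<^sub>R v))"
    if "\<bar>t\<bar> < \<delta>" for t using \<delta> that dG by blast
  have rng: "\<bar>d + t*a\<bar> < 2*\<alpha>" if "\<bar>t\<bar> < \<delta>" for t using \<delta> that by fastforce
  have cmp: "1 * (phi \<alpha> (w + t *\<^sub>R v) - (-1 + 2*\<alpha> - sqrt (W \<alpha> (d + t*a)))) \<ge> 0" if t: "\<bar>t\<bar> < \<delta>" for t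
  proof -
    have l: "dDelta \<alpha> (w + t *\<^sub>R v) \<ge> d + t*a"
      using lowerbd[OF \<alpha> x0, of "w + t *\<^sub>R v"] ell[OF sin_cos_squared_add wd, of t v] unfolding a_def by simp
    have "0 < d + t*a" using \<delta> t by blast
    then have "(d + t*a)\<^sup>2 \<le> (dDelta \<alpha> (w + t *\<^sub>R v))\<^sup>2" using l by (intro power_mono) auto
    then have "W \<alpha> (dDelta \<alpha> (w + t *\<^sub>R v)) \<le> W \<alpha> (d + t*a)" by (simp add: W_def)
    then have "sqrt (W \<alpha> (dDelta \<alpha> (w + t *\<^sub>R v))) \<le> sqrt (W \<alpha> (d + t*a))" by simp
    then show ?thesis by (simp add: phi_W)
  qed
  have one: "(1::real) \<noteq> 0" by simp
  show "fst (G w) * fst v + snd (G w) * snd v = a * f1 \<alpha> d"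
    using cmp2(1)[OF \<alpha> d \<delta>(1) dG' rng cmp dw one] by simp
  assume H: "(G has_derivative H) (at w)"
  show "(fst (H v) * fst v + snd (H v) * snd v) - a * a * f2 \<alpha> d \<ge> 0"
    using cmp2(2)[OF \<alpha> d \<delta>(1) dG' rng cmp dw one H] by simp
qed

lemma upper_nu:
  fixes G H :: "real \<times> real \<Rightarrow> real \<times> real"
  assumes \<alpha>: "0 < \<alpha>" and oU: "open U"
    and dG: "\<forall>q\<in>U. (phi \<alpha> has_derivative (\<lambda>h. fst (G q) * fst h + snd (G q) * snd h)) (at q)"
    and wU: "w \<in> U" and x0: "lo \<alpha> < x0" "x0 < hi \<alpha>" and d: "0 < d" "d < 2*\<alpha>"
    and wd: "w = (x0 + d * sin (th \<alpha> x0), gg \<alpha> x0 - d * cos (th \<alpha> x0))" and dw: "dDelta \<alpha> w = d"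
    and H: "(G has_derivative H) (at w)"
  shows "(fst (H (sin (th \<alpha> x0), - cos (th \<alpha> x0))) * sin (th \<alpha> x0) + snd (H (sin (th \<alpha> x0), - cos (th \<alpha> x0))) * (- cos (th \<alpha> x0))) \<le> f2 \<alpha> d"
proof -
  let ?s = "sin (th \<alpha> x0)" and ?c = "cos (th \<alpha> x0)"
  define v where "v = (?s, - ?c)"
  obtain \<delta> where \<delta>: "\<delta> > 0" "\<forall>t. \<bar>t\<bar> < \<delta> \<longrightarrow> w + t *\<^sub>R v \<in> U \<and> 0 < d + t*1 \<and> d + t*1 < 2*\<alpha>"
    using delta_ex[OF oU wU d] by blast
  have dG': "(phi \<alpha> has_derivative (\<lambda>h. fst (G (w + t *\<^sub>R v)) * fst h + snd (G (w + t *\<^sub>R v)) * snd h)) (at (w + t *\<^sub>R v))"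
    if "\<bar>t\<bar> < \<delta>" for t using \<delta> that dG by blast
  have rng: "\<bar>d + t*1\<bar> < 2*\<alpha>" if "\<bar>t\<bar> < \<delta>" for t using \<delta> that by fastforce
  have qD: "(x0, gg \<alpha> x0) \<in> Delta \<alpha>" using x0 by (simp add: Delta_iff)
  have cmp: "-1 * (phi \<alpha> (w + t *\<^sub>R v) - (-1 + 2*\<alpha> - sqrt (W \<alpha> (d + t*1)))) \<ge> 0" if t: "\<bar>t\<bar> < \<delta>" for t
  proof -
    have pos: "0 < d + t" using \<delta> t by auto
    have "dist (w + t *\<^sub>R v) (x0, gg \<alpha> x0) = sqrt (((d + t) * ?s)\<^sup>2 + (-((d + t) * ?c))\<^sup>2)"
      unfolding wd v_def by (simp add: dist_pp algebra_simps)
    also have "((d + t) * ?s)\<^sup>2 + (-((d + t) * ?c))\<^sup>2 = (d + t)\<^sup>2 * ?s\<^sup>2 + (d + t)\<^sup>2 * ?c\<^sup>2"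
      by (simp add: power_mult_distrib)
    also have "\<dots> = (d + t)\<^sup>2" by (metis distrib_left mult_1_right sin_cos_squared_add)
    also have "sqrt ((d + t)\<^sup>2) = d + t" using pos by simp
    finally have u: "dDelta \<alpha> (w + t *\<^sub>R v) \<le> d + t"
      unfolding dDelta_def using infdist_le[OF qD] by metis
    have "(dDelta \<alpha> (w + t *\<^sub>R v))\<^sup>2 \<le> (d + t)\<^sup>2"
      using u by (intro power_mono) (auto simp: dDelta_def infdist_nonneg)
    then have "W \<alpha> (d + t*1) \<le> W \<alpha> (dDelta \<alpha> (w + t *\<^sub>R v))" by (simp add: W_def)
    then have "sqrt (W \<alpha> (d + t*1)) \<le> sqrt (W \<alpha> (dDelta \<alpha> (w + t *\<^sub>R v)))" by simp
    then show ?thesis by (simp add: phi_W)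
  qed
  have m1: "(-1::real) \<noteq> 0" by simp
  show ?thesis
    using cmp2(2)[OF \<alpha> d \<delta>(1) dG' rng cmp dw m1 H] by (simp add: v_def)
qed


lemma gradU:
  fixes G :: "real \<times> real \<Rightarrow> real \<times> real"
  assumes \<alpha>: "0 < \<alpha>" and oU: "open U" and Usub: "U \<subseteq> phiDom \<alpha>"
    and dG: "\<forall>q\<in>U. (phi \<alpha> has_derivative (\<lambda>h. fst (G q) * fst h + snd (G q) * snd h)) (at q)"
    and wU: "w \<in> U"
  shows "\<exists>x0. lo \<alpha> < x0 \<and> x0 < hi \<alpha> \<and> 0 < dDelta \<alpha> w \<and> dDelta \<alpha> w < 2*\<alpha> \<and>
     w = (x0 + dDelta \<alpha> w * sin (th \<alpha> x0), gg \<alpha> x0 - dDelta \<alpha> w * cos (th \<alpha> x0)) \<and>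
     G w = (f1 \<alpha> (dDelta \<alpha> w) * sin (th \<alpha> x0), - (f1 \<alpha> (dDelta \<alpha> w) * cos (th \<alpha> x0)))"
proof -
  have d0: "0 < dDelta \<alpha> w" using d_pos[OF \<alpha> oU Usub wU] .
  have d1: "dDelta \<alpha> w < 2*\<alpha>" using d_lt[OF \<alpha> Usub wU dG] .
  obtain x0 where x0: "lo \<alpha> < x0" "x0 < hi \<alpha>"
    and wd: "w = (x0 + dDelta \<alpha> w * sin (th \<alpha> x0), gg \<alpha> x0 - dDelta \<alpha> w * cos (th \<alpha> x0))"
    using foot[OF \<alpha> d0] by blast
  have g1: "fst (G w) = f1 \<alpha> (dDelta \<alpha> w) * sin (th \<alpha> x0)"
    using lower_cmp(1)[OF \<alpha> oU dG wU x0 d0 d1 wd refl, of "(1,0)"] by simp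
  have g2: "snd (G w) = - (f1 \<alpha> (dDelta \<alpha> w) * cos (th \<alpha> x0))"
    using lower_cmp(1)[OF \<alpha> oU dG wU x0 d0 d1 wd refl, of "(0,1)"] by simp
  have "G w = (f1 \<alpha> (dDelta \<alpha> w) * sin (th \<alpha> x0), - (f1 \<alpha> (dDelta \<alpha> w) * cos (th \<alpha> x0)))"
    using g1 g2 by (simp add: prod_eq_iff)
  then show ?thesis using x0 d0 d1 wd by blast
qed



lemma tau_part:
  fixes G H :: "real \<times> real \<Rightarrow> real \<times> real"
  assumes \<alpha>: "0 < \<alpha>" and oU: "open U" and Usub: "U \<subseteq> phiDom \<alpha>"
    and dG: "\<forall>q\<in>U. (phi \<alpha> has_derivative (\<lambda>h. fst (G q) * fst h + snd (G q) * snd h)) (at q)"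
    and pU: "p \<in> U" and x0: "lo \<alpha> < x0" "x0 < hi \<alpha>" and d: "0 < d" "d < 2*\<alpha>"
    and pd: "p = (x0 + d * sin (th \<alpha> x0), gg \<alpha> x0 - d * cos (th \<alpha> x0))" and dp: "dDelta \<alpha> p = d"
    and H: "(G has_derivative H) (at p)"
  shows "fst (H (cos (th \<alpha> x0), sin (th \<alpha> x0))) * cos (th \<alpha> x0) + snd (H (cos (th \<alpha> x0), sin (th \<alpha> x0))) * sin (th \<alpha> x0)
           \<le> f1 \<alpha> d * (\<alpha>*pi/2) * cos (th \<alpha> x0)"
    and "fst (H (cos (th \<alpha> x0), sin (th \<alpha> x0))) * sin (th \<alpha> x0) + snd (H (cos (th \<alpha> x0), sin (th \<alpha> x0))) * (- cos (th \<alpha> x0)) = 0"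
proof -
  let ?s = "sin (th \<alpha> x0)" and ?c = "cos (th \<alpha> x0)"
  define \<tau> where "\<tau> = (?c, ?s)"
  have c: "?c > 0" using cos_th_pos[OF \<alpha> x0] .
  have c1: "?c \<le> 1" by simp
  obtain e where e: "e > 0" "ball p e \<subseteq> U" using oU pU open_contains_ball by blast
  have Rd: "(RR \<alpha> x0 d has_real_derivative 2 * (d * ?c + uu \<alpha> x0 0) * uu' \<alpha> x0 0) (at 0)"
    by (rule RR_deriv) (use \<alpha> x0 in auto)
  have "isCont (RR \<alpha> x0 d) 0" using DERIV_isCont[OF Rd] .
  then have "(RR \<alpha> x0 d \<longlongrightarrow> RR \<alpha> x0 d 0) (at 0)" by (simp add: isCont_def)
  moreover have "RR \<alpha> x0 d 0 < 4*\<alpha>^2"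
  proof -
    have "d\<^sup>2 < (2*\<alpha>)\<^sup>2" using d by (intro power_strict_mono) auto
    then show ?thesis by (simp add: RR_0 power_mult_distrib)
  qed
  ultimately have "eventually (\<lambda>t. RR \<alpha> x0 d t < 4*\<alpha>^2) (at 0)" by (rule order_tendstoD(2))
  then obtain \<eta> where \<eta>: "\<eta> > 0" "\<And>t. t \<noteq> 0 \<Longrightarrow> dist t 0 < \<eta> \<Longrightarrow> RR \<alpha> x0 d t < 4*\<alpha>^2"
    unfolding eventually_at by auto
  define \<delta> where "\<delta> = min \<eta> (min e (min (x0 - lo \<alpha>) (hi \<alpha> - x0)))"
  have \<delta>0: "\<delta> > 0" using \<eta> e x0 by (simp add: \<delta>_def)
  have tprops: "p + t *\<^sub>R \<tau> \<in> U \<and> lo \<alpha> < x0 + t * ?c \<and> x0 + t * ?c < hi \<alpha> \<and> RR \<alpha> x0 d t < 4*\<alpha>^2"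
    if t: "\<bar>t\<bar> < \<delta>" for t
  proof -
    have n: "norm \<tau> = 1" by (simp add: \<tau>_def norm_Pair)
    have "dist p (p + t *\<^sub>R \<tau>) < e" using t n by (simp add: dist_norm \<delta>_def)
    then have "p + t *\<^sub>R \<tau> \<in> U" using e by auto
    moreover have "\<bar>t * ?c\<bar> \<le> \<bar>t\<bar>" using c c1 by (simp add: abs_mult mult_left_le)
    moreover have "RR \<alpha> x0 d t < 4*\<alpha>^2"
      using \<eta>(2)[of t] t \<open>RR \<alpha> x0 d 0 < 4*\<alpha>^2\<close> by (cases "t = 0") (auto simp: \<delta>_def)
    ultimately show ?thesis using t unfolding \<delta>_def by (smt (verit))
  qed
  have Gp: "G p = (f1 \<alpha> d * ?s, - (f1 \<alpha> d * ?c))"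
  proof -
    have g1: "fst (G p) = f1 \<alpha> d * ?s"
      using lower_cmp(1)[OF \<alpha> oU dG pU x0 d pd dp, of "(1,0)"] by simp
    have g2: "snd (G p) = - (f1 \<alpha> d * ?c)"
      using lower_cmp(1)[OF \<alpha> oU dG pU x0 d pd dp, of "(0,1)"] by simp
    show ?thesis using g1 g2 by (simp add: prod_eq_iff)
  qed
  define e2 where "e2 t = (-1 + 2*\<alpha> - sqrt (4*\<alpha>^2 - RR \<alpha> x0 d t)) - phi \<alpha> (p + t *\<^sub>R \<tau>)" for t
  define e2' where "e2' t = P2' \<alpha> x0 d t - (fst (G (p + t *\<^sub>R \<tau>)) * fst \<tau> + snd (G (p + t *\<^sub>R \<tau>)) * snd \<tau>)" for t
  have e2pos: "e2 t \<ge> 0" if t: "\<bar>t\<bar> < \<delta>" for t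
  proof -
    have tp: "lo \<alpha> < x0 + t * ?c" "x0 + t * ?c < hi \<alpha>" using tprops[OF t] by auto
    have u: "dDelta \<alpha> (p + t *\<^sub>R \<tau>) \<le> sqrt (RR \<alpha> x0 d t)"
      using dist_RR[OF \<alpha> tp, of d] unfolding pd \<tau>_def .
    have R0: "RR \<alpha> x0 d t \<ge> 0" by (simp add: RR_def)
    have "(dDelta \<alpha> (p + t *\<^sub>R \<tau>))\<^sup>2 \<le> (sqrt (RR \<alpha> x0 d t))\<^sup>2"
      using u by (intro power_mono) (auto simp: dDelta_def infdist_nonneg)
    then have "(dDelta \<alpha> (p + t *\<^sub>R \<tau>))\<^sup>2 \<le> RR \<alpha> x0 d t" using R0 by simp
    then have "sqrt (4*\<alpha>^2 - RR \<alpha> x0 d t) \<le> sqrt (4*\<alpha>^2 - (dDelta \<alpha> (p + t *\<^sub>R \<tau>))\<^sup>2)" by simp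
    then show ?thesis by (simp add: e2_def phi_def)
  qed
  have e20: "e2 0 = 0" using d by (simp add: e2_def phi_def dp RR_0)
  have e2d: "(e2 has_real_derivative e2' t) (at t)" if t: "\<bar>t\<bar> < \<delta>" for t
  proof -
    have tp: "lo \<alpha> < x0 + t * ?c" "x0 + t * ?c < hi \<alpha>" "RR \<alpha> x0 d t < 4*\<alpha>^2" using tprops[OF t] by auto
    have dU: "(phi \<alpha> has_derivative (\<lambda>h. fst (G (p + t *\<^sub>R \<tau>)) * fst h + snd (G (p + t *\<^sub>R \<tau>)) * snd h)) (at (p + t *\<^sub>R \<tau>))"
      using dG tprops[OF t] by blast
    show ?thesis unfolding e2_def[abs_def] e2'_def
      by (rule DERIV_diff[OF Psi2_deriv[OF \<alpha> tp] dir_deriv[OF dU]])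
  qed
  have e2'd: "(e2' has_real_derivative (f1 \<alpha> d * (\<alpha>*pi/2) * ?c - (fst (H \<tau>) * fst \<tau> + snd (H \<tau>) * snd \<tau>))) (at 0)"
    unfolding e2'_def[abs_def]
    by (rule DERIV_diff[OF P2'_deriv0[OF \<alpha> x0 d] dir_deriv2[OF H]])
  have "f1 \<alpha> d * (\<alpha>*pi/2) * ?c - (fst (H \<tau>) * fst \<tau> + snd (H \<tau>) * snd \<tau>) \<ge> 0"
    using second_order[OF \<delta>0 e2pos e20 e2d e2'd] by blast
  then show "fst (H (?c, ?s)) * ?c + snd (H (?c, ?s)) * ?s \<le> f1 \<alpha> d * (\<alpha>*pi/2) * ?c"
    by (simp add: \<tau>_def)
  define e3 where "e3 t = f1 \<alpha> (sqrt (RR \<alpha> x0 d t)) - (fst (G (p + t *\<^sub>R \<tau>)) * ?s + snd (G (p + t *\<^sub>R \<tau>)) * (- ?c))" for t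
  have e3pos: "e3 0 \<le> e3 t" if t: "\<bar>0 - t\<bar> < \<delta>" for t
  proof -
    have t': "\<bar>t\<bar> < \<delta>" using t by simp
    have tp: "p + t *\<^sub>R \<tau> \<in> U" "lo \<alpha> < x0 + t * ?c" "x0 + t * ?c < hi \<alpha>" "RR \<alpha> x0 d t < 4*\<alpha>^2"
      using tprops[OF t'] by auto
    obtain x1 where x1: "0 < dDelta \<alpha> (p + t *\<^sub>R \<tau>)" "dDelta \<alpha> (p + t *\<^sub>R \<tau>) < 2*\<alpha>"
      "G (p + t *\<^sub>R \<tau>) = (f1 \<alpha> (dDelta \<alpha> (p + t *\<^sub>R \<tau>)) * sin (th \<alpha> x1), - (f1 \<alpha> (dDelta \<alpha> (p + t *\<^sub>R \<tau>)) * cos (th \<alpha> x1)))"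
      using gradU[OF \<alpha> oU Usub dG tp(1)] by blast
    define dw where "dw = dDelta \<alpha> (p + t *\<^sub>R \<tau>)"
    have f0: "0 \<le> f1 \<alpha> dw" using f1_nonneg[OF \<alpha>] x1 unfolding dw_def by auto
    have "fst (G (p + t *\<^sub>R \<tau>)) * ?s + snd (G (p + t *\<^sub>R \<tau>)) * (- ?c)
        = f1 \<alpha> dw * cos (th \<alpha> x1 - th \<alpha> x0)"
      using x1(3) unfolding dw_def by (simp add: cos_diff algebra_simps)
    also have "\<dots> \<le> f1 \<alpha> dw" using f0 by (simp add: mult_left_le)
    also have "\<dots> \<le> f1 \<alpha> (sqrt (RR \<alpha> x0 d t))"
    proof (rule f1_mono[OF \<alpha>])
      show "0 \<le> dw" using x1 by (simp add: dw_def)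
      show "dw \<le> sqrt (RR \<alpha> x0 d t)"
        using dist_RR[OF \<alpha> tp(2,3), of d] unfolding dw_def pd \<tau>_def .
      have "sqrt (RR \<alpha> x0 d t) < sqrt (4*\<alpha>^2)" using tp(4) by simp
      also have "sqrt (4*\<alpha>^2) = 2*\<alpha>" using \<alpha>
        by (metis less_imp_le mult_2 power2_eq_square real_sqrt_abs abs_of_nonneg power_mult_distrib
            zero_le_mult_iff zero_le_numeral real_sqrt_mult real_sqrt_four real_sqrt_unique)
      finally show "sqrt (RR \<alpha> x0 d t) < 2*\<alpha>" .
    qed
    finally have "e3 t \<ge> 0" by (simp add: e3_def)
    moreover have "e3 0 = 0"
    proof -
      have k: "f1 \<alpha> d * (?c * ?c) + f1 \<alpha> d * (?s * ?s) = f1 \<alpha> d"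
        by (metis add.commute distrib_left mult_1_right power2_eq_square sin_cos_squared_add)
      show ?thesis using d k by (simp add: e3_def RR_0 Gp algebra_simps)
    qed
    ultimately show ?thesis by simp
  qed
  have e3d: "(e3 has_real_derivative (0 - (fst (H \<tau>) * ?s + snd (H \<tau>) * (- ?c)))) (at 0)"
    unfolding e3_def[abs_def]
    by (rule DERIV_diff[OF Psi3_deriv0[OF \<alpha> x0 d] dir_deriv2[OF H]])
  have "0 - (fst (H \<tau>) * ?s + snd (H \<tau>) * (- ?c)) = 0"
    by (rule DERIV_local_min[OF e3d \<delta>0]) (use e3pos in blast)
  then show "fst (H (?c, ?s)) * ?s + snd (H (?c, ?s)) * (- ?c) = 0" by (simp add: \<tau>_def)
qed



lemma powr32: "0 < x \<Longrightarrow> x powr (3/2) = x * sqrt (x::real)"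
proof -
  assume x: "0 < x"
  have "x powr (3/2) = x powr (1 + 1/2)" by simp
  also have "\<dots> = x powr 1 * x powr (1/2)" by (rule powr_add)
  also have "\<dots> = x * sqrt x" using x by (simp add: powr_half_sqrt)
  finally show ?thesis .
qed

lemma final_alg:
  assumes \<alpha>: "0 < \<alpha>" and d: "0 < d" "d < 2*\<alpha>" and sc: "s\<^sup>2 + c\<^sup>2 = 1"
  shows "f2 \<alpha> d * (f1 \<alpha> d * (\<alpha>*pi/2) * c) / (1 + (f1 \<alpha> d * s)\<^sup>2 + (- (f1 \<alpha> d * c))\<^sup>2) powr (3/2)
         = -(pi/4) * (- (f1 \<alpha> d * c))"
proof -
  define w where "w = W \<alpha> d"
  define r where "r = sqrt w"
  have w: "w > 0" unfolding w_def using W_pos[of \<alpha> d] \<alpha> d by simp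
  have r: "r > 0" "r\<^sup>2 = w" "r * r = w" using w by (auto simp: r_def power2_eq_square)
  have wd: "w + d\<^sup>2 = 4*\<alpha>^2" by (simp add: w_def W_def)
  have f1: "f1 \<alpha> d = d / r" by (simp add: f1_def r_def w_def)
  have f2: "f2 \<alpha> d = 4*\<alpha>^2 / (w * r)" by (simp add: f2_def r_def w_def)
  have "(f1 \<alpha> d * s)\<^sup>2 + (- (f1 \<alpha> d * c))\<^sup>2 = (f1 \<alpha> d)\<^sup>2 * (s\<^sup>2 + c\<^sup>2)"
    by (simp add: power_mult_distrib algebra_simps)
  also have "\<dots> = (f1 \<alpha> d)\<^sup>2" using sc by simp
  also have "\<dots> = d\<^sup>2 / w" unfolding f1 by (simp add: power_divide r)
  finally have e: "(f1 \<alpha> d * s)\<^sup>2 + (- (f1 \<alpha> d * c))\<^sup>2 = d\<^sup>2 / w" .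
  have "1 + d\<^sup>2 / w = (w + d\<^sup>2) / w" using w by (simp add: field_simps)
  then have P: "1 + (f1 \<alpha> d * s)\<^sup>2 + (- (f1 \<alpha> d * c))\<^sup>2 = 4*\<alpha>^2 / w"
    using e wd by (simp add: add.assoc)
  have sq4: "sqrt (4*\<alpha>^2) = 2*\<alpha>"
  proof -
    have e: "4*\<alpha>^2 = (2*\<alpha>)\<^sup>2" by (simp add: power_mult_distrib)
    show ?thesis by (subst e, subst real_sqrt_abs) (use \<alpha> in simp)
  qed
  have sP: "sqrt (4*\<alpha>^2 / w) = 2*\<alpha> / r" by (simp add: real_sqrt_divide sq4 r_def)
  have pos: "0 < 4*\<alpha>^2 / w" using \<alpha> w by simp
  have pw: "(4*\<alpha>^2 / w) powr (3/2) = (4*\<alpha>^2 / w) * (2*\<alpha> / r)" using powr32[OF pos] sP by simp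
  have "f2 \<alpha> d * (f1 \<alpha> d * (\<alpha>*pi/2) * c) / ((4*\<alpha>^2 / w) * (2*\<alpha> / r)) = -(pi/4) * (- (f1 \<alpha> d * c))"
    unfolding f1 f2 using \<alpha> r w by (simp add: field_simps power2_eq_square)
  then show ?thesis by (subst P, subst pw)
qed

lemma kill_m:
  fixes m T :: real
  assumes "\<And>\<sigma>. \<sigma> * m + \<sigma>\<^sup>2 * T \<ge> 0"
  shows "m = 0"
proof -
  define k where "k = \<bar>T\<bar> + 1"
  have k: "k > 0" "T - k < 0" by (auto simp: k_def)
  have "(-m/k) * m + (-m/k)\<^sup>2 * T = m\<^sup>2 * (T - k) / k\<^sup>2"
    using k by (simp add: field_simps power2_eq_square)
  then have "m\<^sup>2 * (T - k) / k\<^sup>2 \<ge> 0" using assms[of "-m/k"] by simp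
  then have "m\<^sup>2 * (T - k) \<ge> 0" using k by (simp add: zero_le_divide_iff)
  then have "m\<^sup>2 \<le> 0" using k by (simp add: zero_le_mult_iff)
  then show ?thesis by simp
qed



lemma part2:
  fixes G H :: "real \<times> real \<Rightarrow> real \<times> real"
  assumes \<alpha>: "0 < \<alpha>" and oU: "open U" and Usub: "U \<subseteq> phiDom \<alpha>" and pU: "p \<in> U"
    and dG: "\<forall>q\<in>U. (phi \<alpha> has_derivative (\<lambda>h. fst (G q) * fst h + snd (G q) * snd h)) (at q)"
    and H: "(G has_derivative H) (at p)"
  shows "(fst (H (1,0)) * snd (H (0,1)) - snd (H (1,0)) * fst (H (0,1)))
            / (1 + (fst (G p))^2 + (snd (G p))^2) powr (3/2)
          \<le> -(pi/4) * snd (G p)"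
proof -
  obtain x0 where x0: "lo \<alpha> < x0" "x0 < hi \<alpha>" and d0: "0 < dDelta \<alpha> p" and d1: "dDelta \<alpha> p < 2*\<alpha>"
    and pd: "p = (x0 + dDelta \<alpha> p * sin (th \<alpha> x0), gg \<alpha> x0 - dDelta \<alpha> p * cos (th \<alpha> x0))"
    and Gp: "G p = (f1 \<alpha> (dDelta \<alpha> p) * sin (th \<alpha> x0), - (f1 \<alpha> (dDelta \<alpha> p) * cos (th \<alpha> x0)))"
    using gradU[OF \<alpha> oU Usub dG pU] by blast
  define d where "d = dDelta \<alpha> p"
  define s where "s = sin (th \<alpha> x0)"
  define c where "c = cos (th \<alpha> x0)"
  have dp: "dDelta \<alpha> p = d" by (simp add: d_def)
  have d0': "0 < d" "d < 2*\<alpha>" using d0 d1 by (auto simp: d_def)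
  have pd': "p = (x0 + d * sin (th \<alpha> x0), gg \<alpha> x0 - d * cos (th \<alpha> x0))" using pd by (simp add: d_def)
  have sc: "s\<^sup>2 + c\<^sup>2 = 1" by (simp add: s_def c_def)
  define a11 where "a11 = fst (H (1,0))"
  define a21 where "a21 = snd (H (1,0))"
  define a12 where "a12 = fst (H (0,1))"
  define a22 where "a22 = snd (H (0,1))"
  have lin: "H v = (a11 * fst v + a12 * snd v, a21 * fst v + a22 * snd v)" for v
    using linH[OF H, of v] by (simp add: a11_def a12_def a21_def a22_def)
  define Q where "Q v w = fst (H v) * fst w + snd (H v) * snd w" for v w
  define \<nu> where "\<nu> = (s, -c)"
  define \<tau> where "\<tau> = (c, s)"
  have aN: "fst \<nu> * sin (th \<alpha> x0) - snd \<nu> * cos (th \<alpha> x0) = 1"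
    using sc by (simp add: \<nu>_def s_def c_def power2_eq_square)
  have F1: "Q \<nu> \<nu> \<ge> f2 \<alpha> d"
    using lower_cmp(2)[OF \<alpha> oU dG pU x0 d0' pd' dp H, of \<nu>] unfolding aN by (simp add: Q_def)
  have F2: "Q \<nu> \<nu> \<le> f2 \<alpha> d"
    using upper_nu[OF \<alpha> oU dG pU x0 d0' pd' dp H] by (simp add: Q_def \<nu>_def s_def c_def)
  have F4: "Q \<tau> \<tau> \<le> f1 \<alpha> d * (\<alpha>*pi/2) * c"
    using tau_part(1)[OF \<alpha> oU Usub dG pU x0 d0' pd' dp H] by (simp add: Q_def \<tau>_def s_def c_def)
  have F5: "Q \<tau> \<nu> = 0"
    using tau_part(2)[OF \<alpha> oU Usub dG pU x0 d0' pd' dp H] by (simp add: Q_def \<tau>_def \<nu>_def s_def c_def)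
  have F3: "\<sigma> * (Q \<nu> \<tau> + Q \<tau> \<nu>) + \<sigma>\<^sup>2 * Q \<tau> \<tau> \<ge> 0" for \<sigma>
  proof -
    define v where "v = (s + \<sigma> * c, -c + \<sigma> * s)"
    have av: "fst v * sin (th \<alpha> x0) - snd v * cos (th \<alpha> x0) = 1"
    proof -
      have "fst v * sin (th \<alpha> x0) - snd v * cos (th \<alpha> x0) = s\<^sup>2 + c\<^sup>2"
        by (simp add: v_def s_def c_def power2_eq_square algebra_simps)
      then show ?thesis using sc by simp
    qed
    have "Q v v \<ge> f2 \<alpha> d"
      using lower_cmp(2)[OF \<alpha> oU dG pU x0 d0' pd' dp H, of v] unfolding av by (simp add: Q_def)
    moreover have "Q v v = Q \<nu> \<nu> + \<sigma> * (Q \<nu> \<tau> + Q \<tau> \<nu>) + \<sigma>\<^sup>2 * Q \<tau> \<tau>"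
      unfolding Q_def lin by (simp add: v_def \<nu>_def \<tau>_def power2_eq_square algebra_simps)
    ultimately show ?thesis using F2 by simp
  qed
  have m0: "Q \<nu> \<tau> = 0"
    by (rule kill_m[where T = "Q \<tau> \<tau>"]) (use F3 F5 in simp)
  have det: "a11 * a22 - a21 * a12 = Q \<nu> \<nu> * Q \<tau> \<tau> - Q \<tau> \<nu> * Q \<nu> \<tau>"
    unfolding Q_def lin \<nu>_def \<tau>_def fst_conv snd_conv by (rule det_rot[OF sc])
  have QN: "Q \<nu> \<nu> = f2 \<alpha> d" using F1 F2 by simp
  have f2pos: "0 \<le> f2 \<alpha> d"
    using W_pos[of \<alpha> d] \<alpha> d0' by (simp add: f2_def)
  have detle: "a11 * a22 - a21 * a12 \<le> f2 \<alpha> d * (f1 \<alpha> d * (\<alpha>*pi/2) * c)"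
    unfolding det QN F5 m0 using mult_left_mono[OF F4 f2pos] by simp
  have Gp': "G p = (f1 \<alpha> d * s, - (f1 \<alpha> d * c))" using Gp by (simp add: d_def s_def c_def)
  define Dn where "Dn = (1 + (f1 \<alpha> d * s)\<^sup>2 + (- (f1 \<alpha> d * c))\<^sup>2) powr (3/2)"
  have "0 < 1 + (f1 \<alpha> d * s)\<^sup>2 + (- (f1 \<alpha> d * c))\<^sup>2"
    by (intro add_pos_nonneg) auto
  then have Dn: "Dn > 0" unfolding Dn_def by simp
  have "(a11 * a22 - a21 * a12) / Dn \<le> f2 \<alpha> d * (f1 \<alpha> d * (\<alpha>*pi/2) * c) / Dn"
    using divide_right_mono[OF detle, of Dn] Dn by linarith
  also have "\<dots> = -(pi/4) * (- (f1 \<alpha> d * c))"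
    unfolding Dn_def by (rule final_alg[OF \<alpha> d0' sc])
  finally show ?thesis
    unfolding Gp' fst_conv snd_conv Dn_def[symmetric] a11_def[symmetric] a22_def[symmetric]
      a12_def[symmetric] a21_def[symmetric] .
qed

theorem lemma4p3:
  fixes \<alpha> :: real
  assumes "0 < \<alpha>" and "\<alpha> < 1/6"
  shows "(\<forall>C. C \<subseteq> phiDom \<alpha> \<and> convex C \<longrightarrow> convex_on C (phi \<alpha>)) \<and>
    (\<forall>p U (G :: real \<times> real \<Rightarrow> real \<times> real) H.
        open U \<and> p \<in> U \<and> U \<subseteq> phiDom \<alpha> \<and>
        (\<forall>q\<in>U. (phi \<alpha> has_derivative (\<lambda>h. fst (G q) * fst h + snd (G q) * snd h)) (at q)) \<and>
        (G has_derivative H) (at p)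
      \<longrightarrow> (fst (H (1,0)) * snd (H (0,1)) - snd (H (1,0)) * fst (H (0,1)))
            / (1 + (fst (G p))^2 + (snd (G p))^2) powr (3/2)
          \<le> -(pi/4) * snd (G p))"
  using part1[OF assms(1)] part2[OF assms(1)] by blast


end
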